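(* Let $k\in\mathbb{N}$, $n>2k$, and $q^*(k)=\frac{(n+2)k}{n-2k}$. Consider the problem \[ S_k(D^2u)=\lambda(1-u)^{q^*(k)}\ \text{in } B,\qquad u<0\ \text{in } B,\qquad u=0\ \text{on }\partial B, \] and set $\mu^*(k)=\dfrac{\binom{n}{k}\left(\frac{n-2k}{k}\right)^k k^k}{(k+1)^{k+1}}$. \begin{itemize} \item[(i)] If $\lambda\in(0,\mu^*(k))$, the equation $\lambda(d+1)^{k+1}-\binom{n}{k}\left(\frac{n-2k}{k}\right)^k d^k=0$ has exactly two positive roots $d_-(\lambda)<d_+(\lambda)$, and the problem has exactly two radially symmetric solutions, given by \[ u_\lambda(x)=1-\lambda^{-\frac{n-2k}{2k(k+1)}}\big(-w_{d_-(\lambda)}(x)\big),\qquad U_\lambda(x)=1-\lambda^{-\frac{n-2k}{2k(k+1)}}\big(-w_{d_+(\lambda)}(x)\big),\quad x\in B. \] \item[(ii)] If $\lambda=\mu^*(k)$, the problem has a unique radially symmetric solution, given by \[ u^*(x)=1-(\mu^*(k))^{-\frac{n-2k}{2k(k+1)}}\big(-w_k(x)\big)=1-\left(\frac{1+k}{1+k|x|^2}\right)^{\frac{n-2k}{2k}},\quad x\in B. \] \end{itemize}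
   Context: $B$ is the unit ball of $\mathbb{R}^n$; $S_k(D^2u)$ denotes the $k$-th elementary symmetric polynomial of the eigenvalues of the Hessian $D^2u$; solutions are understood in the class $\{u\in C^2(B)\cap C(\overline B): S_i(D^2u)\ge0 \text{ in } B,\ i=1,\dots,k\}$. For $d>0$ the Bliss function $w_d$ is \[ w_d(x)=-\frac{\left[d\binom{n}{k}^{1/k}\left(\frac{n-2k}{k}\right)\right]^{\frac{n-2k}{2(k+1)}}}{(1+d|x|^2)^{\frac{n-2k}{2k}}},\quad x\in\mathbb{R}^n. \] *)

theory Defs
  imports "HOL-Analysis.Analysis"
begin

definition pderiv1 :: "'n::finite \<Rightarrow> (real^'n \<Rightarrow> real) \<Rightarrow> real^'n \<Rightarrow> real" where
  "pderiv1 j u x = frechet_derivative u (at x) (axis j 1)"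

definition hessian :: "(real^'n::finite \<Rightarrow> real) \<Rightarrow> real^'n \<Rightarrow> real^'n^'n" where
  "hessian u x = (\<chi> i j. frechet_derivative (pderiv1 j u) (at x) (axis i 1))"

definition C2_on :: "(real^'n::finite) set \<Rightarrow> (real^'n \<Rightarrow> real) \<Rightarrow> bool" where
  "C2_on S u \<longleftrightarrow>
     (\<forall>x\<in>S. u differentiable (at x)) \<and>
     (\<forall>j. \<forall>x\<in>S. pderiv1 j u differentiable (at x)) \<and>
     (\<forall>i j. continuous_on S (\<lambda>x. hessian u x $ i $ j))"

definition eigvals_sym :: "real^'n::finite^'n \<Rightarrow> ('n \<Rightarrow> real)" where
  "eigvals_sym A = (SOME ev. \<exists>P. orthogonal_matrix P \<and>
       A = P ** (\<chi> i j. if i = j then ev i else 0) ** transpose P)"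

definition elem_sym :: "nat \<Rightarrow> ('n::finite \<Rightarrow> real) \<Rightarrow> real" where
  "elem_sym k ev = (\<Sum>I \<in> {I. card I = k}. \<Prod>i\<in>I. ev i)"

definition S_k :: "nat \<Rightarrow> real^'n::finite^'n \<Rightarrow> real" where
  "S_k k A = elem_sym k (eigvals_sym A)"

(* Bliss function w_d on R^n, n = CARD('n) *)
definition bliss :: "nat \<Rightarrow> real \<Rightarrow> real^'n::finite \<Rightarrow> real" where
  "bliss k d x =
     (let n = real CARD('n) in
      - ((d * (real (CARD('n) choose k)) powr (1 / real k) * ((n - 2 * real k) / real k))
           powr ((n - 2 * real k) / (2 * (real k + 1))))
      / (1 + d * (norm x)^2) powr ((n - 2 * real k) / (2 * real k)))"

definition qstar :: "'n::finite itself \<Rightarrow> nat \<Rightarrow> real" where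
  "qstar _ k = (real CARD('n) + 2) * real k / (real CARD('n) - 2 * real k)"

definition mustar :: "'n::finite itself \<Rightarrow> nat \<Rightarrow> real" where
  "mustar _ k = real (CARD('n) choose k) * ((real CARD('n) - 2 * real k) / real k) ^ k
                 * real k ^ k / (real k + 1) ^ (k + 1)"

definition is_solution :: "nat \<Rightarrow> real \<Rightarrow> (real^'n::finite \<Rightarrow> real) \<Rightarrow> bool" where
  "is_solution k lam u \<longleftrightarrow>
     C2_on (ball 0 1) u \<and> continuous_on (cball 0 1) u \<and>
     (\<forall>i\<in>{1..k}. \<forall>x\<in>ball 0 1. S_k i (hessian u x) \<ge> 0) \<and>
     (\<forall>x\<in>ball 0 1. S_k k (hessian u x) = lam * (1 - u x) powr qstar TYPE('n) k) \<and>
     (\<forall>x\<in>ball 0 1. u x < 0) \<and>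
     (\<forall>x\<in>sphere 0 1. u x = 0)"

definition radial :: "(real^'n::finite \<Rightarrow> real) \<Rightarrow> bool" where
  "radial u \<longleftrightarrow> (\<exists>\<phi>. \<forall>x\<in>cball 0 1. u x = \<phi> (norm x))"

end

theory Submission
  imports Defs "HOL-Computational_Algebra.Polynomial"
begin

definition diagm :: "('n::finite \<Rightarrow> real) \<Rightarrow> real^'n^'n" where
  "diagm e = (\<chi> i j. if i = j then e i else 0)"

lemma prod_shift_sum:
  fixes e :: "'n::finite \<Rightarrow> real"
  shows "(\<Prod>i\<in>UNIV. t + e i) = (\<Sum>j\<le>CARD('n). elem_sym j e * t ^ (CARD('n) - j))"
proof -
  have "(\<Prod>i\<in>UNIV. t + e i) = (\<Prod>i\<in>UNIV. e i + t)" by (simp add: add.commute)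
  also have "\<dots> = (\<Sum>X\<in>Pow UNIV. (\<Prod>x\<in>X. e x) * (\<Prod>x\<in>UNIV-X. t))"
    by (rule prod_add) simp
  also have "\<dots> = (\<Sum>X\<in>Pow UNIV. (\<Prod>x\<in>X. e x) * t ^ (CARD('n) - card X))"
    by (intro sum.cong refl) (simp add: card_Diff_subset)
  also have "\<dots> = (\<Sum>j\<le>CARD('n). (\<Sum>X\<in>{X\<in>Pow UNIV. card X = j}. (\<Prod>x\<in>X. e x) * t ^ (CARD('n) - card X)))"
    by (rule sum.group[symmetric]) (auto simp: card_mono)
  also have "\<dots> = (\<Sum>j\<le>CARD('n). elem_sym j e * t ^ (CARD('n) - j))"
    unfolding elem_sym_def sum_distrib_right
    by (intro sum.cong refl) auto
  finally show ?thesis .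
qed

lemma elem_sym_big:
  fixes e :: "'n::finite \<Rightarrow> real"
  assumes "j > CARD('n)" shows "elem_sym j e = 0"
proof -
  have "card I \<le> CARD('n)" for I :: "'n set" by (rule card_mono) auto
  then have "card I \<noteq> j" for I :: "'n set" using assms by (meson leD)
  then have "{I::'n set. card I = j} = {}" by auto
  then show ?thesis by (simp add: elem_sym_def)
qed

lemma elem_sym_eq_from_prod:
  fixes e f :: "'n::finite \<Rightarrow> real"
  assumes "\<And>t. (\<Prod>i\<in>UNIV. t + e i) = (\<Prod>i\<in>UNIV. t + f i)"
  shows "elem_sym j e = elem_sym j f"
proof (cases "j \<le> CARD('n)")
  case False then show ?thesis by (simp add: elem_sym_big)
next
  case True
  define P where "P g = (\<Sum>j\<le>CARD('n). monom (elem_sym j g) (CARD('n) - j))" for g :: "'n \<Rightarrow> real"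
  have pP: "poly (P g) t = (\<Prod>i\<in>UNIV. t + g i)" for g t
    by (simp add: P_def prod_shift_sum poly_sum poly_monom)
  have "poly (P e) = poly (P f)" using assms pP by auto
  then have "P e = P f" by (simp add: poly_eq_poly_eq_iff)
  then have "coeff (P e) (CARD('n) - j) = coeff (P f) (CARD('n) - j)" by simp
  moreover have "coeff (P g) (CARD('n) - j) = elem_sym j g" for g
  proof -
    have "coeff (P g) (CARD('n) - j) = (\<Sum>i\<le>CARD('n). if CARD('n) - i = CARD('n) - j then elem_sym i g else 0)"
      by (simp add: P_def coeff_sum)
    also have "\<dots> = (\<Sum>i\<in>{j}. elem_sym i g)"
      by (rule sum.mono_neutral_cong_right) (use True in auto)
    finally show ?thesis by simp
  qed
  ultimately show ?thesis by simp
qed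

lemma mat_mul_diag_transpose:
  fixes P :: "real^'n::finite^'n"
  shows "(P ** diagm e ** transpose P) $ i $ j = (\<Sum>l\<in>UNIV. P$i$l * e l * P$j$l)"
  by (simp add: matrix_matrix_mult_def diagm_def transpose_def sum_distrib_right if_distrib
       cong: if_cong)

lemma det_shift:
  fixes P :: "real^'n::finite^'n"
  assumes oP: "orthogonal_matrix P"
  shows "det (mat t + P ** diagm e ** transpose P) = (\<Prod>i\<in>UNIV. t + e i)"
proof -
  have "P ** transpose P = mat 1" using oP by (simp add: orthogonal_matrix_def)
  have "mat t + P ** diagm e ** transpose P = P ** diagm (\<lambda>i. t + e i) ** transpose P"
  proof -
    have "(P ** transpose P) $ i $ j = (\<Sum>l\<in>UNIV. P$i$l * P$j$l)" for i j
      by (simp add: matrix_matrix_mult_def transpose_def)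
    then have id: "(\<Sum>l\<in>UNIV. P$i$l * P$j$l) = (if i = j then 1 else 0)" for i j
      using \<open>P ** transpose P = mat 1\<close> by (simp add: mat_def)
    show ?thesis
      apply (rule vec_eq_iff[THEN iffD2], rule allI, rule vec_eq_iff[THEN iffD2], rule allI)
      subgoal for i j
      proof -
        have "(\<Sum>l\<in>UNIV. P$i$l * (t + e l) * P$j$l) = t * (\<Sum>l\<in>UNIV. P$i$l * P$j$l) + (\<Sum>l\<in>UNIV. P$i$l * e l * P$j$l)"
          by (simp add: sum_distrib_left distrib_left distrib_right sum.distrib mult_ac)
        then show ?thesis using id[of i j] by (simp add: mat_mul_diag_transpose mat_def)
      qed
      done
  qed
  also have "det \<dots> = det P * det (diagm (\<lambda>i. t + e i)) * det P"
    by (simp add: det_mul)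
  also have "det (diagm (\<lambda>i. t + e i)) = (\<Prod>i\<in>UNIV. t + e i)"
    by (subst det_diagonal) (auto simp: diagm_def)
  finally show ?thesis using det_orthogonal_matrix[OF oP] by auto
qed

lemma elem_sym_invariant:
  fixes P Q :: "real^'n::finite^'n"
  assumes "orthogonal_matrix P" "orthogonal_matrix Q"
    and "P ** diagm e ** transpose P = Q ** diagm f ** transpose Q"
  shows "elem_sym j e = elem_sym j f"
  by (rule elem_sym_eq_from_prod) (metis assms det_shift)

lemma S_k_from_diag:
  fixes P :: "real^'n::finite^'n"
  assumes "orthogonal_matrix P" "A = P ** diagm e ** transpose P"
  shows "S_k j A = elem_sym j e"
proof -
  have "\<exists>ev. \<exists>P. orthogonal_matrix P \<and> A = P ** (\<chi> i j. if i = j then ev i else 0) ** transpose P"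
    using assms unfolding diagm_def by blast
  from someI_ex[OF this] obtain Q where "orthogonal_matrix Q"
     "A = Q ** diagm (eigvals_sym A) ** transpose Q"
    unfolding eigvals_sym_def diagm_def by blast
  then show ?thesis unfolding S_k_def using elem_sym_invariant assms by metis
qed

lemma elem_sym_special:
  fixes i0 :: "'n::finite"
  assumes "j \<ge> 1"
  shows "elem_sym j (\<lambda>i. if i = i0 then a + g else a)
       = real (CARD('n) choose j) * a ^ j + real ((CARD('n) - 1) choose (j - 1)) * a ^ (j - 1) * g"
proof -
  let ?S = "{I::'n set. card I = j}"
  let ?M = "{I\<in>?S. i0 \<in> I}"
  have fin: "finite ?S" by simp
  have pr: "(\<Prod>i\<in>I. if i = i0 then a + g else a) = a ^ j + (if i0 \<in> I then a ^ (j - 1) * g else 0)"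
    if "I \<in> ?S" for I
  proof (cases "i0 \<in> I")
    case True
    have "(\<Prod>i\<in>I. if i = i0 then a + g else a) = (a + g) * (\<Prod>i\<in>I - {i0}. if i = i0 then a + g else a)"
      using True by (simp add: prod.remove)
    also have "(\<Prod>i\<in>I - {i0}. if i = i0 then a + g else a) = (\<Prod>i\<in>I - {i0}. a)"
      by (rule prod.cong) auto
    also have "\<dots> = a ^ (j - 1)" using that True by simp
    moreover obtain l where l: "j = Suc l" using assms by (cases j) auto
    ultimately show ?thesis using True by (simp add: algebra_simps)
  next
    case False
    have "(\<Prod>i\<in>I. if i = i0 then a + g else a) = (\<Prod>i\<in>I. a)"
      by (rule prod.cong) (use False in auto)
    then show ?thesis using that False by simp
  qed
  have "elem_sym j (\<lambda>i. if i = i0 then a + g else a) = (\<Sum>I\<in>?S. a ^ j + (if i0 \<in> I then a ^ (j - 1) * g else 0))"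
    unfolding elem_sym_def by (rule sum.cong) (use pr in auto)
  also have "\<dots> = real (card ?S) * a ^ j + real (card ?M) * (a ^ (j - 1) * g)"
    by (simp add: sum.distrib sum.If_cases Int_def)
  also have "card ?S = CARD('n) choose j"
    using n_subsets[of "UNIV::'n set" j] by simp
  also have "card ?M = (CARD('n) - 1) choose (j - 1)"
  proof -
    have e1: "?S = ?M \<union> {B. B \<subseteq> UNIV - {i0} \<and> card B = j}" by auto
    have "card (?M \<union> {B. B \<subseteq> UNIV - {i0} \<and> card B = j}) = card ?M + card {B. B \<subseteq> UNIV - {i0} \<and> card B = j}"
      by (rule card_Un_disjoint) auto
    then have "card ?S = card ?M + card {B. B \<subseteq> UNIV - {i0} \<and> card B = j}"
      by (subst e1)
    moreover have "card {B. B \<subseteq> UNIV - {i0} \<and> card B = j} = (CARD('n) - 1) choose j"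
      using n_subsets[of "UNIV - {i0}" j] by simp
    moreover have "card ?S = CARD('n) choose j"
      using n_subsets[of "UNIV::'n set" j] by simp
    moreover have "CARD('n) choose j = ((CARD('n) - 1) choose j) + ((CARD('n) - 1) choose (j - 1))"
    proof -
      obtain m where m: "CARD('n) = Suc m" using gr0_implies_Suc[OF finite_UNIV_card_ge_0[where 'a='n]] by auto
      obtain l where l: "j = Suc l" using assms by (cases j) auto
      show ?thesis by (simp add: m l)
    qed
    ultimately show ?thesis by linarith
  qed
  finally show ?thesis by (simp add: mult_ac)
qed

definition rk1 :: "real \<Rightarrow> real \<Rightarrow> real^'n::finite \<Rightarrow> real^'n^'n" where
  "rk1 a b x = (\<chi> i j. (if i = j then a else 0) + b * x$i * x$j)"

lemma householder:
  fixes e :: "real^'n::finite"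
  assumes "norm e = 1" "e $ i0 \<ge> 0"
  shows "\<exists>P. orthogonal_matrix P \<and> (\<forall>i. P$i$i0 = - e$i)"
proof -
  define b :: "real^'n" where "b = axis i0 1"
  define v where "v = e + b"
  have ee: "e \<bullet> e = 1" using assms by (simp add: dot_square_norm)
  have eb: "e \<bullet> b = e$i0" unfolding b_def inner_vec_def axis_def by (simp add: if_distrib cong: if_cong)
  have vv: "v \<bullet> v = 2 + 2 * e$i0"
  proof -
    have bb: "b \<bullet> b = 1" by (simp add: b_def inner_axis_axis)
    have be: "b \<bullet> e = e$i0" using eb by (simp add: inner_commute)
    show ?thesis by (simp add: v_def inner_add_left inner_add_right ee eb be bb)
  qed
  have vpos: "v \<bullet> v > 0" using vv assms by simp
  define P :: "real^'n^'n" where "P = (\<chi> i j. (if i = j then 1 else 0) - 2 * v$i * v$j / (v \<bullet> v))"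
  have vs: "(\<Sum>l\<in>UNIV. v$l * v$l) = v \<bullet> v" by (simp add: inner_vec_def)
  have "transpose P ** P = mat 1"
  proof (rule vec_eq_iff[THEN iffD2], rule allI, rule vec_eq_iff[THEN iffD2], rule allI)
    fix i j
    have "(transpose P ** P) $ i $ j = (\<Sum>l\<in>UNIV. P$l$i * P$l$j)"
      by (simp add: matrix_matrix_mult_def transpose_def)
    also have "\<dots> = (\<Sum>l\<in>UNIV. (if l = i then (if l = j then 1 else 0) else 0)
        - (if l = i then (2 * v$l * v$j / (v \<bullet> v)) else 0)
        - (if l = j then (2 * v$l * v$i / (v \<bullet> v)) else 0)
        + (4 * v$i * v$j / (v \<bullet> v)^2) * (v$l * v$l))"
      by (rule sum.cong) (auto simp: P_def algebra_simps power2_eq_square)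
    also have "\<dots> = (\<Sum>l\<in>UNIV. (if l = i then (if l = j then 1 else 0) else 0))
        - (\<Sum>l\<in>UNIV. (if l = i then (2 * v$l * v$j / (v \<bullet> v)) else 0))
        - (\<Sum>l\<in>UNIV. (if l = j then (2 * v$l * v$i / (v \<bullet> v)) else 0))
        + (\<Sum>l\<in>UNIV. (4 * v$i * v$j / (v \<bullet> v)^2) * (v$l * v$l))"
      by (simp only: sum.distrib sum_subtractf)
    also have "\<dots> = (if i = j then 1 else 0) - 2 * v$i * v$j / (v \<bullet> v) - 2 * v$j * v$i / (v \<bullet> v)
        + (4 * v$i * v$j / (v \<bullet> v)^2) * (v \<bullet> v)"
      by (simp only: sum.delta finite UNIV_I if_True vs flip: sum_distrib_left)
    also have "\<dots> = (if i = j then 1 else 0)"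
      using vpos by (simp add: field_simps power2_eq_square)
    finally show "(transpose P ** P) $ i $ j = mat 1 $ i $ j" by (simp add: mat_def)
  qed
  then have "orthogonal_matrix P" by (simp add: orthogonal_matrix)
  moreover have "P$i$i0 = - e$i" for i
  proof -
    have vi0: "v$i0 = e$i0 + 1" by (simp add: v_def b_def)
    have "P$i$i0 = (if i = i0 then 1 else 0) - v$i"
      using vpos by (simp add: P_def vi0 vv field_simps)
    also have "\<dots> = - e$i" by (simp add: v_def b_def axis_def)
    finally show ?thesis .
  qed
  ultimately show ?thesis by blast
qed

lemma S_k_rk1:
  fixes x :: "real^'n::finite"
  assumes "j \<ge> 1"
  shows "S_k j (rk1 a b x)
       = real (CARD('n) choose j) * a ^ j + real ((CARD('n) - 1) choose (j - 1)) * a ^ (j - 1) * (b * (x \<bullet> x))"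
proof -
  obtain i0 :: 'n where True by blast
  obtain P where oP: "orthogonal_matrix P" and Pc: "\<And>i j'. P$i$i0 * P$j'$i0 * (x \<bullet> x) = x$i * x$j'"
  proof (cases "x = 0")
    case True
    then show ?thesis using that[of "mat 1"] orthogonal_matrix_id by (simp add: mat_def)
  next
    case False
    define e where "e = (if x$i0 \<ge> 0 then 1 else -1) * (1 / norm x) *\<^sub>R x"
    have ne: "norm e = 1" using False by (simp add: e_def)
    have "e$i0 \<ge> 0" using False by (auto simp: e_def)
    from householder[OF ne this] obtain P where "orthogonal_matrix P" "\<forall>i. P$i$i0 = - e$i" by blast
    moreover have "e$i * e$j' * (x \<bullet> x) = x$i * x$j'" for i j'
      using False by (simp add: e_def dot_square_norm power2_eq_square field_simps)
    ultimately show ?thesis using that by auto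
  qed
  define ev where "ev = (\<lambda>i. if i = i0 then a + b * (x \<bullet> x) else a)"
  have "rk1 a b x = P ** diagm ev ** transpose P"
  proof (rule vec_eq_iff[THEN iffD2], rule allI, rule vec_eq_iff[THEN iffD2], rule allI)
    fix i j'
    have orth: "(\<Sum>l\<in>UNIV. P$i$l * P$j'$l) = (if i = j' then 1 else 0)"
    proof -
      have "P ** transpose P = mat 1" using oP by (simp add: orthogonal_matrix_def)
      then have "(P ** transpose P) $ i $ j' = mat 1 $ i $ j'" by simp
      then show ?thesis by (simp add: matrix_matrix_mult_def transpose_def mat_def)
    qed
    have "(\<Sum>l\<in>UNIV. P$i$l * ev l * P$j'$l) = (\<Sum>l\<in>UNIV. a * (P$i$l * P$j'$l)
           + (if l = i0 then b * (x \<bullet> x) * (P$i$i0 * P$j'$i0) else 0))"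
      by (rule sum.cong) (auto simp: ev_def algebra_simps)
    also have "\<dots> = a * (if i = j' then 1 else 0) + b * (x \<bullet> x) * (P$i$i0 * P$j'$i0)"
      by (simp add: sum.distrib orth flip: sum_distrib_left)
    also have "\<dots> = (if i = j' then a else 0) + b * x$i * x$j'"
      using Pc[of i j'] by (simp add: field_simps)
    finally show "rk1 a b x $ i $ j' = (P ** diagm ev ** transpose P) $ i $ j'"
      by (simp add: mat_mul_diag_transpose rk1_def)
  qed
  then have "S_k j (rk1 a b x) = elem_sym j ev" by (rule S_k_from_diag[OF oP])
  also have "\<dots> = real (CARD('n) choose j) * a ^ j + real ((CARD('n) - 1) choose (j - 1)) * a ^ (j - 1) * (b * (x \<bullet> x))"
    unfolding ev_def by (rule elem_sym_special[OF assms])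
  finally show ?thesis by simp
qed

lemma vec_nth_has_derivative: "((\<lambda>y::real^'n::finite. y $ j) has_derivative (\<lambda>h. h $ j)) F"
  by (rule bounded_linear_imp_has_derivative) (rule bounded_linear_vec_nth)

lemma sq_has_derivative:
  "((\<lambda>y::real^'n::finite. y \<bullet> y) has_derivative (\<lambda>h. 2 * (x \<bullet> h))) (at x)"
proof -
  have "((\<lambda>y::real^'n. y \<bullet> y) has_derivative (\<lambda>h. x \<bullet> h + h \<bullet> x)) (at x)"
    by (intro derivative_eq_intros) auto
  then show ?thesis by (simp add: inner_commute)
qed

lemma comp_sq_has_derivative:
  assumes "(g has_real_derivative g1) (at (x \<bullet> x))"
  shows "((\<lambda>y::real^'n::finite. g (y \<bullet> y)) has_derivative (\<lambda>h. g1 * (2 * (x \<bullet> h)))) (at x)"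
  using has_derivative_compose[OF sq_has_derivative has_field_derivative_imp_has_derivative[OF assms]] .

lemma radial_sq_facts:
  fixes g g1 g2 :: "real \<Rightarrow> real" and d :: real
  assumes d: "\<And>s. s \<ge> 0 \<Longrightarrow> (g has_real_derivative g1 s) (at s)"
      and d1: "\<And>s. s \<ge> 0 \<Longrightarrow> (g1 has_real_derivative g2 s) (at s)"
  defines "u \<equiv> (\<lambda>x::real^'n::finite. g (x \<bullet> x))"
  shows "u differentiable (at x)"
    and "pderiv1 j u = (\<lambda>y. 2 * g1 (y \<bullet> y) * y $ j)"
    and "pderiv1 j u differentiable (at x)"
    and "hessian u x = rk1 (2 * g1 (x \<bullet> x)) (4 * g2 (x \<bullet> x)) x"
proof -
  have du: "(u has_derivative (\<lambda>h. g1 (y \<bullet> y) * (2 * (y \<bullet> h)))) (at y)" for y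
    unfolding u_def by (rule comp_sq_has_derivative[OF d]) simp
  then show "u differentiable (at x)" by (auto simp: differentiable_def)
  show pd: "pderiv1 j u = (\<lambda>y. 2 * g1 (y \<bullet> y) * y $ j)" for j
  proof
    fix y
    show "pderiv1 j u y = 2 * g1 (y \<bullet> y) * y $ j"
      unfolding pderiv1_def frechet_derivative_at[OF du[of y], symmetric]
      by (simp add: cart_eq_inner_axis[symmetric])
  qed
  have dp: "(pderiv1 j u has_derivative
        (\<lambda>h. 2 * (g2 (x \<bullet> x) * (2 * (x \<bullet> h))) * x $ j + 2 * g1 (x \<bullet> x) * h $ j)) (at x)" for j
  proof -
    have "((\<lambda>y. g1 (y \<bullet> y)) has_derivative (\<lambda>h. g2 (x \<bullet> x) * (2 * (x \<bullet> h)))) (at x)"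
      by (rule comp_sq_has_derivative[OF d1]) simp
    then have "((\<lambda>y. 2 * g1 (y \<bullet> y) * y $ j) has_derivative
        (\<lambda>h. 2 * (g2 (x \<bullet> x) * (2 * (x \<bullet> h))) * x $ j + 2 * g1 (x \<bullet> x) * h $ j)) (at x)"
      by (intro derivative_eq_intros vec_nth_has_derivative) (auto simp: algebra_simps intro: vec_nth_has_derivative)
    then show ?thesis by (simp add: pd)
  qed
  then show "pderiv1 j u differentiable (at x)" by (auto simp: differentiable_def)
  show "hessian u x = rk1 (2 * g1 (x \<bullet> x)) (4 * g2 (x \<bullet> x)) x"
    unfolding hessian_def rk1_def
  proof (rule vec_eq_iff[THEN iffD2], rule allI, rule vec_eq_iff[THEN iffD2], rule allI)
    fix i j
    show "(\<chi> i j. frechet_derivative (pderiv1 j u) (at x) (axis i 1)) $ i $ j =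
          (\<chi> i j. (if i = j then 2 * g1 (x \<bullet> x) else 0) + 4 * g2 (x \<bullet> x) * x $ i * x $ j) $ i $ j"
    proof -
      have fd: "frechet_derivative (pderiv1 j u) (at x) =
        (\<lambda>h. 2 * (g2 (x \<bullet> x) * (2 * (x \<bullet> h))) * x $ j + 2 * g1 (x \<bullet> x) * h $ j)"
        using frechet_derivative_at[OF dp[of j]] by simp
      have "x \<bullet> axis i 1 = x$i" by (simp add: cart_eq_inner_axis)
      then show ?thesis by (simp add: fd axis_def)
    qed
  qed
qed

lemma norm_derivative_simp:
  fixes x :: "real^'n::finite"
  assumes "x \<noteq> 0"
  shows "(norm has_derivative (\<lambda>h. (x \<bullet> h) / norm x)) (at x)"
proof -
  have "(norm has_derivative (\<lambda>h. h \<bullet> sgn x)) (at x)" using has_derivative_norm[OF assms] .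
  moreover have "(\<lambda>h. h \<bullet> sgn x) = (\<lambda>h. (x \<bullet> h) / norm x)"
    by (auto simp: sgn_div_norm inner_commute divide_inverse)
  ultimately show ?thesis by simp
qed

lemma radial_deriv1:
  fixes u :: "real^'n::finite \<Rightarrow> real" and \<phi> D :: "real \<Rightarrow> real"
  assumes eq: "\<forall>x\<in>ball 0 1. u x = \<phi> (norm x)"
    and dphi: "\<And>t. t \<in> {0<..<1} \<Longrightarrow> (\<phi> has_real_derivative D t) (at t)"
    and y: "y \<in> ball 0 1" "y \<noteq> 0"
  shows "(u has_derivative (\<lambda>h. D (norm y) * ((y \<bullet> h) / norm y))) (at y)"
proof -
  have "((\<lambda>z. \<phi> (norm z)) has_derivative (\<lambda>h. D (norm y) * ((y \<bullet> h) / norm y))) (at y)"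
    using has_derivative_compose[OF norm_derivative_simp[OF y(2)]
        has_field_derivative_imp_has_derivative[OF dphi[of "norm y"]]] y
    by (simp add: mult.commute)
  then show ?thesis
    by (rule has_derivative_transform_within_open[of _ _ _ _ "ball 0 1"]) (use y eq in auto)
qed

lemma radial_pderiv:
  fixes u :: "real^'n::finite \<Rightarrow> real" and \<phi> D :: "real \<Rightarrow> real"
  assumes eq: "\<forall>x\<in>ball 0 1. u x = \<phi> (norm x)"
    and dphi: "\<And>t. t \<in> {0<..<1} \<Longrightarrow> (\<phi> has_real_derivative D t) (at t)"
    and y: "y \<in> ball 0 1" "y \<noteq> 0"
  shows "pderiv1 j u y = D (norm y) * y $ j / norm y"
proof -
  have fd: "frechet_derivative u (at y) = (\<lambda>h. D (norm y) * ((y \<bullet> h) / norm y))"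
    using frechet_derivative_at[OF radial_deriv1[OF eq dphi y]] by simp
  show ?thesis unfolding pderiv1_def fd by (simp add: cart_eq_inner_axis)
qed

lemma radial_hessian:
  fixes u :: "real^'n::finite \<Rightarrow> real" and \<phi> D D2 :: "real \<Rightarrow> real"
  assumes eq: "\<forall>x\<in>ball 0 1. u x = \<phi> (norm x)"
    and dphi: "\<And>t. t \<in> {0<..<1} \<Longrightarrow> (\<phi> has_real_derivative D t) (at t)"
    and dD: "\<And>t. t \<in> {0<..<1} \<Longrightarrow> (D has_real_derivative D2 t) (at t)"
    and x: "x \<in> ball 0 1" "x \<noteq> 0"
  shows "hessian u x = rk1 (D (norm x) / norm x) ((D2 (norm x) - D (norm x) / norm x) / (norm x)^2) x"
proof -
  let ?r = "norm x"
  have r: "?r > 0" "?r < 1" using x by auto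
  have dQ: "(pderiv1 j u has_derivative
     (\<lambda>h. D2 ?r * ((x \<bullet> h) / ?r) * (x $ j / ?r) + D ?r * ((h $ j * ?r - x $ j * ((x \<bullet> h) / ?r)) / ?r ^ 2))) (at x)" for j
  proof -
    have d1: "((\<lambda>z. D (norm z)) has_derivative (\<lambda>h. D2 ?r * ((x \<bullet> h) / ?r))) (at x)"
      using has_derivative_compose[OF norm_derivative_simp[OF x(2)]
        has_field_derivative_imp_has_derivative[OF dD[of ?r]]] r by (simp add: mult.commute)
    have d2: "((\<lambda>z. z $ j / norm z) has_derivative (\<lambda>h. (h $ j * ?r - x $ j * ((x \<bullet> h) / ?r)) / ?r ^ 2)) (at x)"
      using has_derivative_divide[OF vec_nth_has_derivative norm_derivative_simp[OF x(2)]] r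
      by (simp add: power2_eq_square field_simps)
    have "((\<lambda>z. D (norm z) * (z $ j / norm z)) has_derivative
       (\<lambda>h. D (norm x) * ((h $ j * ?r - x $ j * ((x \<bullet> h) / ?r)) / ?r ^ 2) + D2 ?r * ((x \<bullet> h) / ?r) * (x $ j / ?r))) (at x)"
      using has_derivative_mult[OF d1 d2] by simp
    then have "((\<lambda>z. D (norm z) * (z $ j / norm z)) has_derivative
     (\<lambda>h. D2 ?r * ((x \<bullet> h) / ?r) * (x $ j / ?r) + D ?r * ((h $ j * ?r - x $ j * ((x \<bullet> h) / ?r)) / ?r ^ 2))) (at x)"
      by (simp add: add.commute)
    then show ?thesis
    proof (rule has_derivative_transform_within_open[of _ _ _ _ "ball 0 1 - {0}"])
      show "open (ball 0 1 - {0::real^'n})" by auto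
      show "x \<in> ball 0 1 - {0}" using x by auto
      show "D (norm z) * (z $ j / norm z) = pderiv1 j u z" if "z \<in> ball 0 1 - {0}" for z
        using radial_pderiv[OF eq dphi, of z j] that by auto
    qed
  qed
  show ?thesis
    unfolding hessian_def rk1_def
  proof (rule vec_eq_iff[THEN iffD2], rule allI, rule vec_eq_iff[THEN iffD2], rule allI)
    fix i j
    have fd: "frechet_derivative (pderiv1 j u) (at x) =
     (\<lambda>h. D2 ?r * ((x \<bullet> h) / ?r) * (x $ j / ?r) + D ?r * ((h $ j * ?r - x $ j * ((x \<bullet> h) / ?r)) / ?r ^ 2))"
      using frechet_derivative_at[OF dQ[of j]] by simp
    have xa: "x \<bullet> axis i 1 = x$i" by (simp add: cart_eq_inner_axis)
    have aj: "axis i 1 $ j = (if i = j then 1 else (0::real))" by (simp add: axis_def)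
    show "(\<chi> i j. frechet_derivative (pderiv1 j u) (at x) (axis i 1)) $ i $ j =
       (\<chi> i j. (if i = j then D ?r / ?r else 0) + (D2 ?r - D ?r / ?r) / ?r\<^sup>2 * x $ i * x $ j) $ i $ j"
      using r by (simp add: fd xa aj power2_eq_square field_simps)
  qed
qed

definition odesol :: "nat \<Rightarrow> nat \<Rightarrow> real \<Rightarrow> real \<Rightarrow> (real \<Rightarrow> real) \<Rightarrow> (real \<Rightarrow> real) \<Rightarrow> (real \<Rightarrow> real) \<Rightarrow> bool" where
  "odesol n k lam q \<phi> D D2 \<longleftrightarrow>
     continuous_on {0..1} \<phi> \<and>
     (\<forall>t\<in>{0<..<1}. (\<phi> has_real_derivative D t) (at t)) \<and>
     (\<forall>t\<in>{0<..<1}. (D has_real_derivative D2 t) (at t)) \<and>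
     (\<forall>t\<in>{0<..<1}. real (n choose k) * (D t / t) ^ k
         + real ((n - 1) choose (k - 1)) * (D t / t) ^ (k - 1) * (D2 t - D t / t)
         = lam * (1 - \<phi> t) powr q) \<and>
     (\<exists>B \<delta>. \<delta> > 0 \<and> (\<forall>t\<in>{0<..<\<delta>}. \<bar>D t\<bar> \<le> B)) \<and>
     (\<forall>t\<in>{0..1}. \<phi> t < 1) \<and> \<phi> 0 < \<phi> 1"

lemma binom_rel:
  assumes "1 \<le> k" "k < n"
  shows "real k * (real (n choose k) - real ((n - 1) choose (k - 1))) = (real n - real k) * real ((n - 1) choose (k - 1))"
proof -
  have a: "k * (n choose k) = n * ((n - 1) choose (k - 1))"
    using assms by (intro times_binomial_minus1_eq) simp
  have b: "n choose k = ((n - 1) choose (k - 1)) + ((n - 1) choose k)"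
    using assms by (intro choose_reduce_nat) auto
  have "real k * real (n choose k) = real n * real ((n - 1) choose (k - 1))"
    using a by (metis of_nat_mult)
  then show ?thesis using assms by (simp add: algebra_simps)
qed

lemma F_deriv:
  assumes ode: "odesol n k lam q \<phi> D D2" and k: "1 \<le> k" "k < n" and t: "t \<in> {0<..<1}"
  shows "((\<lambda>t. t ^ (n - k) * D t ^ k) has_real_derivative
           (real k * lam / real ((n - 1) choose (k - 1))) * t ^ (n - 1) * (1 - \<phi> t) powr q) (at t)"
proof -
  have dD: "(D has_real_derivative D2 t) (at t)" and eq: "real (n choose k) * (D t / t) ^ k
         + real ((n - 1) choose (k - 1)) * (D t / t) ^ (k - 1) * (D2 t - D t / t)
         = lam * (1 - \<phi> t) powr q"
    using ode t unfolding odesol_def by auto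
  have tpos: "t > 0" using t by simp
  obtain p where p: "n = k + p + 1" using k by (metis add.commute add_Suc less_imp_Suc_add plus_1_eq_Suc)
  obtain k' where k': "k = Suc k'" using k by (cases k) auto
  have Cm: "real ((n - 1) choose (k - 1)) > 0" using k by simp
  have br: "real k * (real (n choose k) - real ((n - 1) choose (k - 1))) = (real n - real k) * real ((n - 1) choose (k - 1))"
    using binom_rel k by blast
  have der: "((\<lambda>t. t ^ (n - k) * D t ^ k) has_real_derivative
      (real (n - k) * t ^ (n - k - 1) * D t ^ k + t ^ (n - k) * (real k * D t ^ (k - 1) * D2 t))) (at t)"
    by (auto intro!: derivative_eq_intros dD simp: algebra_simps)
  have "real (n - k) * t ^ (n - k - 1) * D t ^ k + t ^ (n - k) * (real k * D t ^ (k - 1) * D2 t)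
      = (real k / real ((n - 1) choose (k - 1))) * t ^ (n - 1) *
        (real (n choose k) * (D t / t) ^ k
         + real ((n - 1) choose (k - 1)) * (D t / t) ^ (k - 1) * (D2 t - D t / t))"
  proof -
    let ?Cn = "real (n choose k)" and ?Cm = "real ((n - 1) choose (k - 1))"
    have e1: "?Cn = ?Cm + (real n - real k) * ?Cm / real k" using br k by (simp add: field_simps)
    define d where "d = D t / t"
    have Dt: "D t = t * d" using tpos by (simp add: d_def)
    have "(real k / ?Cm) * (?Cn * d ^ k + ?Cm * d ^ (k - 1) * (D2 t - d))
        = (real k * ?Cn / ?Cm - real k) * d ^ k + real k * d ^ (k - 1) * D2 t"
      using Cm by (simp add: field_simps k')
    also have "real k * ?Cn / ?Cm - real k = real n - real k"
      using br Cm by (simp add: field_simps)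
    finally have s1: "(real k / ?Cm) * (?Cn * d ^ k + ?Cm * d ^ (k - 1) * (D2 t - d))
        = (real n - real k) * d ^ k + real k * d ^ (k - 1) * D2 t" .
    have "(real k / ?Cm) * t ^ (n - 1) * (?Cn * (D t / t) ^ k + ?Cm * (D t / t) ^ (k - 1) * (D2 t - D t / t))
        = t ^ (n - 1) * ((real n - real k) * d ^ k + real k * d ^ (k - 1) * D2 t)"
      unfolding d_def[symmetric] s1[symmetric] by (simp only: mult_ac)
    also have "\<dots> = real (n - k) * t ^ (n - k - 1) * D t ^ k + t ^ (n - k) * (real k * D t ^ (k - 1) * D2 t)"
      unfolding Dt using k by (simp add: p k' power_mult_distrib power_add algebra_simps)
    finally show ?thesis by simp
  qed
  with der eq show ?thesis by (simp add: mult_ac)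
qed

lemma mono0:
  fixes h h' :: "real \<Rightarrow> real"
  assumes t: "0 < t" and dh: "\<And>s. 0 < s \<Longrightarrow> s \<le> t \<Longrightarrow> (h has_real_derivative h' s) (at s)"
    and nn: "\<And>s. 0 < s \<Longrightarrow> s < t \<Longrightarrow> h' s \<ge> 0"
    and lim: "(h \<longlongrightarrow> 0) (at_right 0)"
  shows "h t \<ge> 0"
proof -
  have le: "h e \<le> h t" if "0 < e" "e < t" for e
  proof (rule DERIV_nonneg_imp_increasing_open[of e t h])
    show "e \<le> t" using that by simp
    show "\<exists>y. DERIV h x :> y \<and> y \<ge> 0" if "e < x" "x < t" for x
      using dh[of x] nn[of x] that \<open>0 < e\<close> by auto
    show "continuous_on {e..t} h"
      using \<open>0 < e\<close> by (intro continuous_at_imp_continuous_on ballI DERIV_isCont[OF dh]) auto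
  qed
  have "eventually (\<lambda>e. h e \<le> h t) (at_right 0)"
    unfolding eventually_at_right_field using t le by blast
  then show ?thesis
    using tendsto_le[OF trivial_limit_at_right_real tendsto_const lim] by simp
qed

lemma odesol_D:
  assumes "odesol n k lam q \<phi> D D2" "t \<in> {0<..<1}"
  shows "(\<phi> has_real_derivative D t) (at t)" "(D has_real_derivative D2 t) (at t)"
  using assms unfolding odesol_def by auto

lemma odesol_bounds:
  assumes "odesol n k lam q \<phi> D D2"
  obtains \<nu> M where "\<nu> > 0" "\<And>t. t \<in> {0..1} \<Longrightarrow> \<nu> \<le> 1 - \<phi> t \<and> 1 - \<phi> t \<le> M"
proof -
  have c: "continuous_on {0..1::real} (\<lambda>t. 1 - \<phi> t)"
    using assms unfolding odesol_def by (intro continuous_intros) auto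
  obtain a where a: "a \<in> {0..1}" "\<forall>y\<in>{0..1}. 1 - \<phi> a \<le> 1 - \<phi> y"
    using continuous_attains_inf[OF compact_Icc _ c] by auto
  obtain b where b: "b \<in> {0..1}" "\<forall>y\<in>{0..1}. 1 - \<phi> y \<le> 1 - \<phi> b"
    using continuous_attains_sup[OF compact_Icc _ c] by auto
  have "1 - \<phi> a > 0" using assms a(1) unfolding odesol_def by auto
  then show ?thesis using a b that[of "1 - \<phi> a" "1 - \<phi> b"] by auto
qed

lemma odesol_Flim:
  assumes ode: "odesol n k lam q \<phi> D D2" and k: "k < n"
  shows "((\<lambda>t. t ^ (n - k) * D t ^ k) \<longlongrightarrow> 0) (at_right 0)"
proof -
  obtain B \<delta> where \<delta>: "\<delta> > 0" "\<forall>t\<in>{0<..<\<delta>}. \<bar>D t\<bar> \<le> B"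
    using ode unfolding odesol_def by auto
  have ev: "eventually (\<lambda>t. norm (t ^ (n - k) * D t ^ k) \<le> t ^ (n - k) * B ^ k) (at_right 0)"
    unfolding eventually_at_right_field
  proof (intro exI[of _ \<delta>] conjI allI impI)
    fix t :: real assume "0 < t" "t < \<delta>"
    then have "\<bar>D t\<bar> \<le> B" using \<delta> by auto
    then have "\<bar>D t\<bar> ^ k \<le> B ^ k" by (rule power_mono) simp
    then show "norm (t ^ (n - k) * D t ^ k) \<le> t ^ (n - k) * B ^ k"
      using \<open>0 < t\<close> by (simp add: abs_mult power_abs mult_left_mono)
  qed (use \<delta> in auto)
  have "((\<lambda>t. t ^ (n - k) * B ^ k) \<longlongrightarrow> 0 ^ (n - k) * B ^ k) (at_right 0)"
    by (intro tendsto_intros)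
  then have "((\<lambda>t. t ^ (n - k) * B ^ k) \<longlongrightarrow> 0) (at_right (0::real))" using k by (simp add: power_0_left)
  then show ?thesis by (rule Lim_null_comparison[OF ev])
qed

definition Acoef :: "nat \<Rightarrow> nat \<Rightarrow> real \<Rightarrow> real" where
  "Acoef n k lam = real k * lam / real ((n - 1) choose (k - 1))"

lemma Acoef_pos: "1 \<le> k \<Longrightarrow> k < n \<Longrightarrow> lam > 0 \<Longrightarrow> Acoef n k lam > 0"
  unfolding Acoef_def by simp

lemma odesol_Flower:
  assumes ode: "odesol n k lam q \<phi> D D2" and k: "1 \<le> k" "k < n" and lam: "lam > 0" and q: "q \<ge> 0"
    and \<nu>: "\<nu> > 0" "\<And>t. t \<in> {0..1} \<Longrightarrow> \<nu> \<le> 1 - \<phi> t" and t: "t \<in> {0<..<1}"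
  shows "t ^ (n - k) * D t ^ k \<ge> (Acoef n k lam / real n) * \<nu> powr q * t ^ n"
proof -
  define h where "h s = s ^ (n - k) * D s ^ k - (Acoef n k lam / real n) * \<nu> powr q * s ^ n" for s
  define h' where "h' s = Acoef n k lam * s ^ (n - 1) * (1 - \<phi> s) powr q
       - (Acoef n k lam / real n) * \<nu> powr q * (real n * s ^ (n - 1))" for s
  have "h t \<ge> 0"
  proof (rule mono0[of t h h'])
    show "0 < t" using t by simp
    show "(h has_real_derivative h' s) (at s)" if "0 < s" "s \<le> t" for s
    proof -
      have d1: "((\<lambda>t. t ^ (n - k) * D t ^ k) has_real_derivative
           (real k * lam / real ((n - 1) choose (k - 1))) * s ^ (n - 1) * (1 - \<phi> s) powr q) (at s)"
        using F_deriv[OF ode k, of s] that t by auto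
      have d2: "((\<lambda>s. (Acoef n k lam / real n) * \<nu> powr q * s ^ n) has_real_derivative
          (Acoef n k lam / real n) * \<nu> powr q * (real n * s ^ (n - 1))) (at s)"
        using DERIV_cmult[OF DERIV_pow[of n s], of "(Acoef n k lam / real n) * \<nu> powr q"] by simp
      show ?thesis using DERIV_diff[OF d1 d2] unfolding h_def h'_def Acoef_def by simp
    qed
    show "h' s \<ge> 0" if "0 < s" "s < t" for s
    proof -
      have "\<nu> powr q \<le> (1 - \<phi> s) powr q"
        using \<nu>(2)[of s] \<nu>(1) that t q by (intro powr_mono2) auto
      then have "Acoef n k lam * s ^ (n - 1) * \<nu> powr q \<le> Acoef n k lam * s ^ (n - 1) * (1 - \<phi> s) powr q"
        using Acoef_pos[OF k lam] that by (intro mult_left_mono) auto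
      then show ?thesis unfolding h'_def using k by (simp add: mult_ac)
    qed
    have "((\<lambda>s. s ^ (n - k) * D s ^ k - (Acoef n k lam / real n) * \<nu> powr q * s ^ n) \<longlongrightarrow>
          0 - (Acoef n k lam / real n) * \<nu> powr q * 0 ^ n) (at_right 0)"
      by (intro tendsto_intros odesol_Flim[OF ode k(2)])
    then show "(h \<longlongrightarrow> 0) (at_right 0)" unfolding h_def using k by (simp add: power_0_left)
  qed
  then show ?thesis unfolding h_def by simp
qed

lemma odesol_Fpos:
  assumes ode: "odesol n k lam q \<phi> D D2" and k: "1 \<le> k" "k < n" and lam: "lam > 0" and q: "q \<ge> 0"
    and t: "t \<in> {0<..<1}"
  shows "t ^ (n - k) * D t ^ k > 0"
proof -
  obtain \<nu> M where \<nu>: "\<nu> > 0" "\<And>t. t \<in> {0..1} \<Longrightarrow> \<nu> \<le> 1 - \<phi> t \<and> 1 - \<phi> t \<le> M"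
    using odesol_bounds[OF ode] by blast
  have "(Acoef n k lam / real n) * \<nu> powr q * t ^ n > 0"
    using Acoef_pos[OF k lam] \<nu> t k by simp
  also have "\<dots> \<le> t ^ (n - k) * D t ^ k"
    using odesol_Flower[OF ode k lam q \<nu>(1) _ t] \<nu>(2) by blast
  finally show ?thesis .
qed

lemma odesol_Dpos:
  assumes ode: "odesol n k lam q \<phi> D D2" and k: "1 \<le> k" "k < n" and lam: "lam > 0" and q: "q \<ge> 0"
    and t: "t \<in> {0<..<1}"
  shows "D t > 0"
proof -
  have nz: "D s \<noteq> 0" if "s \<in> {0<..<1}" for s
    using odesol_Fpos[OF ode k lam q that] k by (auto simp: power_0_left)
  have cont: "continuous_on {a..b} D" if "0 < a" "b < 1" for a b
    using that by (intro continuous_at_imp_continuous_on ballI DERIV_isCont[OF odesol_D(2)[OF ode]]) auto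
  have c\<phi>: "continuous_on {0..1} \<phi>" using ode unfolding odesol_def by auto
  have dif: "\<phi> differentiable (at x)" if "0 < x" "x < 1" for x
    using odesol_D(1)[OF ode, of x] that by (auto simp: real_differentiable_def)
  obtain l z where z: "0 < z" "z < 1" "DERIV \<phi> z :> l" "\<phi> 1 - \<phi> 0 = (1 - 0) * l"
    using MVT[OF _ c\<phi> dif] by auto
  have "l = D z" using DERIV_unique[OF z(3) odesol_D(1)[OF ode]] z by auto
  moreover have "\<phi> 1 - \<phi> 0 > 0" using ode unfolding odesol_def by auto
  ultimately have Dz: "D z > 0" using z by simp
  show ?thesis
  proof (rule ccontr)
    assume "\<not> D t > 0"
    then have Dt: "D t < 0" using nz[OF t] by linarith
    show False
    proof (cases "t \<le> z")
      case True
      obtain x where "t \<le> x" "x \<le> z" "D x = 0"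
        using IVT'[of D t 0 z] Dt Dz True cont[of t z] t z by auto
      then show False using nz[of x] t z by auto
    next
      case False
      obtain x where "z \<le> x" "x \<le> t" "D x = 0"
        using IVT2'[of D t 0 z] Dt Dz False cont[of z t] t z by auto
      then show False using nz[of x] t z by auto
    qed
  qed
qed

lemma odesol_Dformula:
  assumes ode: "odesol n k lam q \<phi> D D2" and k: "1 \<le> k" "k < n" and lam: "lam > 0" and q: "q \<ge> 0"
    and t: "t \<in> {0<..<1}"
  shows "D t = (t ^ (n - k) * D t ^ k) powr (1 / real k) / t powr ((real n - real k) / real k)"
proof -
  have Dp: "D t > 0" by (rule odesol_Dpos[OF assms])
  have tp: "t > 0" using t by simp
  have "(t ^ (n - k) * D t ^ k) powr (1 / real k) = (t ^ (n - k)) powr (1 / real k) * (D t ^ k) powr (1 / real k)"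
    using tp Dp by (simp add: powr_mult)
  also have "(t ^ (n - k)) powr (1 / real k) = t powr ((real n - real k) / real k)"
    using tp k by (simp add: powr_realpow[symmetric] powr_powr of_nat_diff)
  also have "(D t ^ k) powr (1 / real k) = D t"
    using Dp k by (simp add: powr_realpow[symmetric] powr_powr)
  finally show ?thesis using tp by simp
qed

lemma lip_powr:
  fixes a b \<nu> M q :: real
  assumes "0 < \<nu>" "\<nu> \<le> a" "a \<le> M" "\<nu> \<le> b" "b \<le> M" "q \<ge> 0"
  shows "\<bar>a powr q - b powr q\<bar> \<le> q * (\<nu> powr (q - 1) + M powr (q - 1)) * \<bar>a - b\<bar>"
proof -
  have "norm ((\<lambda>z. z powr q) a - (\<lambda>z. z powr q) b) \<le> (q * (\<nu> powr (q - 1) + M powr (q - 1))) * norm (a - b)"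
  proof (rule field_differentiable_bound[of "{\<nu>..M}" _ "\<lambda>z. q * z powr (q - 1)"])
    show "convex {\<nu>..M}" by (rule convex_real_interval)
    show "((\<lambda>z. z powr q) has_field_derivative q * z powr (q - 1)) (at z within {\<nu>..M})" if "z \<in> {\<nu>..M}" for z
      using has_real_derivative_powr[of z q] that assms(1) by (auto intro: has_field_derivative_at_within)
    show "norm (q * z powr (q - 1)) \<le> q * (\<nu> powr (q - 1) + M powr (q - 1))" if "z \<in> {\<nu>..M}" for z
    proof -
      have "z powr (q - 1) \<le> \<nu> powr (q - 1) + M powr (q - 1)"
      proof (cases "q - 1 \<le> 0")
        case True
        then have "z powr (q - 1) \<le> \<nu> powr (q - 1)" using that assms(1) by (intro powr_mono2') auto
        then show ?thesis using powr_ge_zero[of M "q - 1"] by linarith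
      next
        case False
        then have "z powr (q - 1) \<le> M powr (q - 1)" using that assms(1) by (intro powr_mono2) auto
        then show ?thesis using powr_ge_zero[of \<nu> "q - 1"] by linarith
      qed
      then show ?thesis using assms(6) that assms(1) by (simp add: abs_mult mult_left_mono)
    qed
  qed (use assms in auto)
  then show ?thesis by simp
qed

lemma lip_root:
  fixes a b c :: real and k :: nat
  assumes "0 < c" "c \<le> a" "c \<le> b" "1 \<le> k"
  shows "\<bar>a powr (1 / real k) - b powr (1 / real k)\<bar> \<le> (1 / real k) * c powr (1 / real k - 1) * \<bar>a - b\<bar>"
proof -
  let ?S = "{c..max a b}"
  have "norm ((\<lambda>z. z powr (1 / real k)) a - (\<lambda>z. z powr (1 / real k)) b) \<le> ((1 / real k) * c powr (1 / real k - 1)) * norm (a - b)"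
  proof (rule field_differentiable_bound[of ?S _ "\<lambda>z. (1 / real k) * z powr (1 / real k - 1)"])
    show "convex ?S" by (rule convex_real_interval)
    show "((\<lambda>z. z powr (1 / real k)) has_field_derivative (1 / real k) * z powr (1 / real k - 1)) (at z within ?S)" if "z \<in> ?S" for z
      using has_real_derivative_powr[of z "1 / real k"] that assms(1) by (auto intro: has_field_derivative_at_within)
    show "norm ((1 / real k) * z powr (1 / real k - 1)) \<le> (1 / real k) * c powr (1 / real k - 1)" if "z \<in> ?S" for z
    proof -
      have "z powr (1 / real k - 1) \<le> c powr (1 / real k - 1)"
        using that assms by (intro powr_mono2') (auto simp: field_simps)
      then show ?thesis using that assms by (simp add: abs_mult divide_right_mono)
    qed
  qed (use assms in auto)
  then show ?thesis by simp
qed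

lemma odesol_unique:
  assumes ode1: "odesol n k lam q \<phi> D D2" and ode2: "odesol n k lam q \<psi> E E2"
    and k: "1 \<le> k" "k < n" and lam: "lam > 0" and q: "q \<ge> 0" and init: "\<phi> 0 = \<psi> 0"
  shows "\<forall>t\<in>{0..1}. \<phi> t = \<psi> t"
proof -
  obtain \<nu>1 M1 where b1: "\<nu>1 > 0" "\<And>t. t \<in> {0..1} \<Longrightarrow> \<nu>1 \<le> 1 - \<phi> t \<and> 1 - \<phi> t \<le> M1"
    using odesol_bounds[OF ode1] by blast
  obtain \<nu>2 M2 where b2: "\<nu>2 > 0" "\<And>t. t \<in> {0..1} \<Longrightarrow> \<nu>2 \<le> 1 - \<psi> t \<and> 1 - \<psi> t \<le> M2"
    using odesol_bounds[OF ode2] by blast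
  define \<nu> where "\<nu> = min \<nu>1 \<nu>2"
  define M where "M = max M1 M2"
  have \<nu>: "\<nu> > 0" using b1 b2 by (simp add: \<nu>_def)
  have bp: "\<nu> \<le> 1 - \<phi> t" "1 - \<phi> t \<le> M" "\<nu> \<le> 1 - \<psi> t" "1 - \<psi> t \<le> M" if "t \<in> {0..1}" for t
    using b1(2)[OF that] b2(2)[OF that] by (auto simp: \<nu>_def M_def)
  define A where "A = Acoef n k lam"
  have A: "A > 0" using Acoef_pos[OF k lam] by (simp add: A_def)
  define c0 where "c0 = (A / real n) * \<nu> powr q"
  have c0: "c0 > 0" using A \<nu> k by (simp add: c0_def)
  define L where "L = q * (\<nu> powr (q - 1) + M powr (q - 1))"
  have L: "L \<ge> 0" using q by (simp add: L_def)
  define K1 where "K1 = (1 / real k) * c0 powr (1 / real k - 1) * (A / real n) * L"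
  have K1: "K1 \<ge> 0" using c0 A L k by (simp add: K1_def)
  define F where "F t = t ^ (n - k) * D t ^ k" for t
  define G where "G t = t ^ (n - k) * E t ^ k" for t
  have Flow: "F t \<ge> c0 * t ^ n" "G t \<ge> c0 * t ^ n" if "t \<in> {0<..<1}" for t
    using odesol_Flower[OF ode1 k lam q \<nu> _ that] odesol_Flower[OF ode2 k lam q \<nu> _ that] bp
    unfolding F_def G_def c0_def A_def by (auto simp: mult_ac)
  have FG: "\<bar>F t - G t\<bar> \<le> (A / real n) * L * \<Delta> * t ^ n"
    if t: "t \<in> {0<..<1}" and D: "\<forall>s\<in>{0..t}. \<bar>\<phi> s - \<psi> s\<bar> \<le> \<Delta>" for t \<Delta>
  proof -
    have dF: "(F has_real_derivative A * s ^ (n - 1) * (1 - \<phi> s) powr q) (at s)"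
     and dG: "(G has_real_derivative A * s ^ (n - 1) * (1 - \<psi> s) powr q) (at s)"
      if "0 < s" "s \<le> t" for s
      using F_deriv[OF ode1 k, of s] F_deriv[OF ode2 k, of s] that t
      unfolding F_def[abs_def] G_def[abs_def] A_def Acoef_def by auto
    have dP: "((\<lambda>s. (A / real n) * L * \<Delta> * s ^ n) has_real_derivative (A / real n) * L * \<Delta> * (real n * s ^ (n - 1))) (at s)" for s
      using DERIV_cmult[OF DERIV_pow[of n s], of "(A / real n) * L * \<Delta>"] by simp
    have pw: "\<bar>(1 - \<phi> s) powr q - (1 - \<psi> s) powr q\<bar> \<le> L * \<Delta>" if "0 < s" "s < t" for s
    proof -
      have "\<bar>(1 - \<phi> s) powr q - (1 - \<psi> s) powr q\<bar> \<le> L * \<bar>(1 - \<phi> s) - (1 - \<psi> s)\<bar>"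
        unfolding L_def using bp[of s] that t \<nu> q by (intro lip_powr) auto
      also have "\<dots> \<le> L * \<Delta>"
      proof -
        have "\<bar>\<phi> s - \<psi> s\<bar> \<le> \<Delta>" using D that by auto
        from mult_left_mono[OF this L] show ?thesis by (simp add: abs_minus_commute)
      qed
      finally show ?thesis .
    qed
    have lim: "((\<lambda>s. (A / real n) * L * \<Delta> * s ^ n + c * (F s - G s)) \<longlongrightarrow> 0) (at_right 0)" for c
    proof -
      have "((\<lambda>s. (A / real n) * L * \<Delta> * s ^ n + c * (F s - G s)) \<longlongrightarrow> (A / real n) * L * \<Delta> * 0 ^ n + c * (0 - 0)) (at_right 0)"
        unfolding F_def G_def by (intro tendsto_intros odesol_Flim[OF ode1 k(2)] odesol_Flim[OF ode2 k(2)])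
      then show ?thesis using k by (simp add: power_0_left)
    qed
    have "(A / real n) * L * \<Delta> * t ^ n + c * (F t - G t) \<ge> 0" if c: "c = 1 \<or> c = -1" for c
    proof (rule mono0[of t _ "\<lambda>s. (A / real n) * L * \<Delta> * (real n * s ^ (n - 1)) + c * (A * s ^ (n - 1) * (1 - \<phi> s) powr q - A * s ^ (n - 1) * (1 - \<psi> s) powr q)"])
      show "0 < t" using t by simp
      show "((\<lambda>s. (A / real n) * L * \<Delta> * s ^ n + c * (F s - G s)) has_real_derivative
        (A / real n) * L * \<Delta> * (real n * s ^ (n - 1)) + c * (A * s ^ (n - 1) * (1 - \<phi> s) powr q - A * s ^ (n - 1) * (1 - \<psi> s) powr q)) (at s)"
        if "0 < s" "s \<le> t" for s
        by (intro DERIV_add dP DERIV_cmult DERIV_diff dF dG that)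
      show "0 \<le> (A / real n) * L * \<Delta> * (real n * s ^ (n - 1)) + c * (A * s ^ (n - 1) * (1 - \<phi> s) powr q - A * s ^ (n - 1) * (1 - \<psi> s) powr q)"
        if "0 < s" "s < t" for s
      proof -
        have e: "(A / real n) * L * \<Delta> * (real n * s ^ (n - 1)) + c * (A * s ^ (n - 1) * (1 - \<phi> s) powr q - A * s ^ (n - 1) * (1 - \<psi> s) powr q)
          = A * s ^ (n - 1) * (L * \<Delta> + c * ((1 - \<phi> s) powr q - (1 - \<psi> s) powr q))"
          using k by (simp add: field_simps)
        have "L * \<Delta> + c * ((1 - \<phi> s) powr q - (1 - \<psi> s) powr q) \<ge> 0"
          using pw[OF that] c by (auto simp: abs_le_iff)
        then show ?thesis unfolding e using A that by simp
      qed
      show "((\<lambda>s. (A / real n) * L * \<Delta> * s ^ n + c * (F s - G s)) \<longlongrightarrow> 0) (at_right 0)" by (rule lim)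
    qed
    from this[of 1] this[of "-1"] show ?thesis by (simp add: abs_le_iff)
  qed
  have DE: "\<bar>D t - E t\<bar> \<le> K1 * \<Delta> * t"
    if t: "t \<in> {0<..<1}" and D: "\<forall>s\<in>{0..t}. \<bar>\<phi> s - \<psi> s\<bar> \<le> \<Delta>" for t \<Delta>
  proof -
    have tp: "t > 0" using t by simp
    have fD: "D t = F t powr (1 / real k) / t powr ((real n - real k) / real k)"
      using odesol_Dformula[OF ode1 k lam q t] unfolding F_def .
    have fE: "E t = G t powr (1 / real k) / t powr ((real n - real k) / real k)"
      using odesol_Dformula[OF ode2 k lam q t] unfolding G_def .
    have ct: "c0 * t ^ n > 0" using c0 tp by simp
    have "\<bar>F t powr (1 / real k) - G t powr (1 / real k)\<bar> \<le> (1 / real k) * (c0 * t ^ n) powr (1 / real k - 1) * \<bar>F t - G t\<bar>"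
      using Flow[OF t] ct k by (intro lip_root) auto
    also have "\<dots> \<le> (1 / real k) * (c0 * t ^ n) powr (1 / real k - 1) * ((A / real n) * L * \<Delta> * t ^ n)"
      using FG[OF t D] k by (intro mult_left_mono) auto
    also have "\<dots> = K1 * \<Delta> * (t ^ n * (t ^ n) powr (1 / real k - 1))"
      using c0 tp by (simp add: K1_def powr_mult mult_ac)
    also have "t ^ n * (t ^ n) powr (1 / real k - 1) = t powr ((real n - real k) / real k) * t"
    proof -
      have "t ^ n * (t ^ n) powr (1 / real k - 1) = t powr (real n + real n * (1 / real k - 1))"
        using tp by (simp add: powr_realpow[symmetric] powr_powr powr_add)
      also have "real n + real n * (1 / real k - 1) = (real n - real k) / real k + 1"
        using k by (simp add: field_simps)
      finally show ?thesis using tp by (simp add: powr_add)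
    qed
    finally have "\<bar>F t powr (1 / real k) - G t powr (1 / real k)\<bar> \<le> K1 * \<Delta> * (t powr ((real n - real k) / real k) * t)" .
    moreover have "\<bar>D t - E t\<bar> = \<bar>F t powr (1 / real k) - G t powr (1 / real k)\<bar> / t powr ((real n - real k) / real k)"
      using tp by (simp add: fD fE diff_divide_distrib[symmetric] abs_divide)
    ultimately show ?thesis using tp by (simp add: divide_le_eq mult_ac)
  qed
  define h where "h = 1 / (2 * K1 + 1)"
  have h: "h > 0" "h * K1 \<le> 1 / 2" using K1 by (auto simp: h_def field_simps)
  have half: "\<forall>t\<in>{0..s}. \<bar>\<phi> t - \<psi> t\<bar> \<le> \<Delta> / 2"
    if r: "0 \<le> r" "\<forall>t\<in>{0..r}. \<phi> t = \<psi> t" and s: "s \<le> 1" "s \<le> r + h"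
       and D: "\<forall>t\<in>{0..s}. \<bar>\<phi> t - \<psi> t\<bar> \<le> \<Delta>" for r s \<Delta>
  proof
    fix t assume t: "t \<in> {0..s}"
    show "\<bar>\<phi> t - \<psi> t\<bar> \<le> \<Delta> / 2"
    proof (cases "t \<le> r")
      case True
      have "\<Delta> \<ge> 0" using D t by force
      then show ?thesis using r True t by auto
    next
      case False
      have cont: "continuous_on {r..t} (\<lambda>x. \<phi> x - \<psi> x)"
        using ode1 ode2 r t s unfolding odesol_def
        by (intro continuous_intros) (auto intro: continuous_on_subset)
      have dif: "(\<lambda>x. \<phi> x - \<psi> x) differentiable (at x)" if "r < x" "x < t" for x
        using odesol_D(1)[OF ode1, of x] odesol_D(1)[OF ode2, of x] that r t s
        by (auto simp: real_differentiable_def intro!: DERIV_diff)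
      obtain l z where z: "r < z" "z < t" "DERIV (\<lambda>x. \<phi> x - \<psi> x) z :> l"
          "(\<phi> t - \<psi> t) - (\<phi> r - \<psi> r) = (t - r) * l"
        using MVT[OF _ cont dif] False by auto
      have zi: "z \<in> {0<..<1}" using z r t s by auto
      have "l = D z - E z"
        using DERIV_unique[OF z(3) DERIV_diff[OF odesol_D(1)[OF ode1 zi] odesol_D(1)[OF ode2 zi]]] .
      moreover have "\<bar>D z - E z\<bar> \<le> K1 * \<Delta> * z"
        using DE[OF zi] D z t by auto
      moreover have "\<Delta> \<ge> 0" using D t by force
      moreover have "K1 * \<Delta> * z \<le> K1 * \<Delta>"
        using zi K1 \<open>\<Delta> \<ge> 0\<close> by (intro mult_left_le) auto
      ultimately have lz: "\<bar>l\<bar> \<le> K1 * \<Delta>" by linarith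
      have "\<phi> r - \<psi> r = 0" using r by auto
      then have "\<bar>\<phi> t - \<psi> t\<bar> = (t - r) * \<bar>l\<bar>" using z False by (simp add: abs_mult)
      also have "\<dots> \<le> h * (K1 * \<Delta>)"
        using lz False s t \<open>\<Delta> \<ge> 0\<close> K1 by (intro mult_mono) auto
      also have "\<dots> \<le> \<Delta> / 2" using h \<open>\<Delta> \<ge> 0\<close>
        using mult_right_mono[OF h(2) \<open>\<Delta> \<ge> 0\<close>] by (simp add: mult_ac)
      finally show ?thesis .
    qed
  qed
  have glob: "\<bar>\<phi> t - \<psi> t\<bar> \<le> M" if "t \<in> {0..1}" for t
    using bp[OF that] \<nu> by auto
  have step: "\<forall>t\<in>{0..s}. \<phi> t = \<psi> t"
    if r: "0 \<le> r" "\<forall>t\<in>{0..r}. \<phi> t = \<psi> t" and s: "s \<le> 1" "s \<le> r + h" for r s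
  proof -
    have it: "\<forall>t\<in>{0..s}. \<bar>\<phi> t - \<psi> t\<bar> \<le> M / 2 ^ i" for i
    proof (induction i)
      case 0 then show ?case using glob s by auto
    next
      case (Suc i)
      from half[OF r s Suc] show ?case by (simp add: mult.commute)
    qed
    show ?thesis
    proof
      fix t assume t: "t \<in> {0..s}"
      show "\<phi> t = \<psi> t"
      proof (rule ccontr)
        assume "\<phi> t \<noteq> \<psi> t"
        then have pos: "\<bar>\<phi> t - \<psi> t\<bar> > 0" by simp
        obtain i where "M / \<bar>\<phi> t - \<psi> t\<bar> < 2 ^ i" using real_arch_pow[of 2] by auto
        then have "M / 2 ^ i < \<bar>\<phi> t - \<psi> t\<bar>" using pos by (simp add: field_simps)
        then show False using it[of i] t by force
      qed
    qed
  qed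
  have ind: "\<forall>t\<in>{0..1}. t \<le> real j * h \<longrightarrow> \<phi> t = \<psi> t" for j
  proof (induction j)
    case 0 then show ?case using init h by auto
  next
    case (Suc j)
    show ?case
    proof (cases "real j * h \<le> 1")
      case True
      have "\<forall>t\<in>{0..min 1 (real (Suc j) * h)}. \<phi> t = \<psi> t"
        by (rule step[of "real j * h"]) (use Suc True h in \<open>auto simp: algebra_simps\<close>)
      then show ?thesis by auto
    next
      case False
      then show ?thesis using Suc by auto
    qed
  qed
  show ?thesis
  proof
    fix t :: real assume t: "t \<in> {0..1}"
    obtain j where "1 / h < real j" using reals_Archimedean2 by blast
    then have "1 \<le> real j * h" using h by (simp add: field_simps)
    then show "\<phi> t = \<psi> t" using ind[of j] t by auto
  qed
qed

lemma radial_odesol: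
  fixes u :: "real^'n::finite \<Rightarrow> real" and \<phi> :: "real \<Rightarrow> real"
  assumes k: "1 \<le> k"
    and C2: "C2_on (ball 0 1) u" and cont: "continuous_on (cball 0 1) u"
    and eqn: "\<forall>x\<in>ball 0 1. S_k k (hessian u x) = lam * (1 - u x) powr q"
    and rad: "\<forall>x\<in>cball 0 1. u x = \<phi> (norm x)"
    and lt1: "\<forall>t\<in>{0..1}. \<phi> t < 1" and mon: "\<phi> 0 < \<phi> 1"
  shows "\<exists>D D2. odesol CARD('n) k lam q \<phi> D D2"
proof -
  obtain j0 :: 'n where True by blast
  define e :: "real^'n" where "e = axis j0 1"
  have ne: "norm e = 1" by (simp add: e_def)
  define D where "D t = pderiv1 j0 u (t *\<^sub>R e)" for t
  define D2 where "D2 t = hessian u (t *\<^sub>R e) $ j0 $ j0" for t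
  have udiff: "u differentiable (at x)" if "x \<in> ball 0 1" for x
    using C2 that unfolding C2_on_def by auto
  have pdiff: "pderiv1 j u differentiable (at x)" if "x \<in> ball 0 1" for x j
    using C2 that unfolding C2_on_def by auto
  have inball: "t *\<^sub>R e \<in> ball 0 1" if "\<bar>t\<bar> < 1" for t
    using that ne by simp
  have line: "((\<lambda>s. s *\<^sub>R e) has_derivative (\<lambda>h. h *\<^sub>R e)) (at t)" for t
    by (intro derivative_eq_intros) auto
  have dphi: "(\<phi> has_real_derivative D t) (at t)" if t: "t \<in> {0<..<1}" for t
  proof -
    let ?fd = "frechet_derivative u (at (t *\<^sub>R e))"
    have du: "(u has_derivative ?fd) (at (t *\<^sub>R e))"
    proof -
      have "u differentiable (at (t *\<^sub>R e))" using udiff[OF inball[of t]] t by auto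
      then show ?thesis by (simp add: frechet_derivative_works[symmetric])
    qed
    have lin: "linear ?fd" using has_derivative_linear[OF du] .
    have "((\<lambda>s. u (s *\<^sub>R e)) has_derivative (\<lambda>h. ?fd (h *\<^sub>R e))) (at t)"
      using has_derivative_compose[OF line du] .
    moreover have "(\<lambda>h. ?fd (h *\<^sub>R e)) = (\<lambda>h. D t * h)"
      using lin by (auto simp: D_def pderiv1_def e_def linear_cmul)
    ultimately have "((\<lambda>s. u (s *\<^sub>R e)) has_real_derivative D t) (at t)"
      by (simp add: has_field_derivative_def)
    then show ?thesis
    proof (rule has_field_derivative_transform_within_open[of _ _ _ "{0<..<1}"])
      show "u (s *\<^sub>R e) = \<phi> s" if "s \<in> {0<..<1}" for s
        using rad that ne by auto
    qed (use t in auto)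
  qed
  have dD: "(D has_real_derivative D2 t) (at t)" if t: "t \<in> {0<..<1}" for t
  proof -
    let ?fd = "frechet_derivative (pderiv1 j0 u) (at (t *\<^sub>R e))"
    have du: "(pderiv1 j0 u has_derivative ?fd) (at (t *\<^sub>R e))"
    proof -
      have "pderiv1 j0 u differentiable (at (t *\<^sub>R e))" using pdiff[OF inball[of t]] t by auto
      then show ?thesis by (simp add: frechet_derivative_works[symmetric])
    qed
    have lin: "linear ?fd" using has_derivative_linear[OF du] .
    have "((\<lambda>s. pderiv1 j0 u (s *\<^sub>R e)) has_derivative (\<lambda>h. ?fd (h *\<^sub>R e))) (at t)"
      using has_derivative_compose[OF line du] .
    moreover have "(\<lambda>h. ?fd (h *\<^sub>R e)) = (\<lambda>h. D2 t * h)"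
      using lin by (auto simp: D2_def hessian_def e_def linear_cmul)
    ultimately show ?thesis by (simp add: has_field_derivative_def D_def[abs_def])
  qed
  have eqb: "\<forall>x\<in>ball 0 1. u x = \<phi> (norm x)" using rad by auto
  have ode: "real (CARD('n) choose k) * (D t / t) ^ k
         + real ((CARD('n) - 1) choose (k - 1)) * (D t / t) ^ (k - 1) * (D2 t - D t / t)
         = lam * (1 - \<phi> t) powr q" if t: "t \<in> {0<..<1}" for t
  proof -
    let ?x = "t *\<^sub>R e"
    have x: "?x \<in> ball 0 1" "?x \<noteq> 0" "norm ?x = t" using t ne by auto
    have H: "hessian u ?x = rk1 (D t / t) ((D2 t - D t / t) / t ^ 2) ?x"
      using radial_hessian[OF eqb dphi dD x(1,2)] x(3) by simp
    have xx: "?x \<bullet> ?x = t ^ 2" using x(3) by (simp add: power2_norm_eq_inner[symmetric])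
    have "S_k k (hessian u ?x) = real (CARD('n) choose k) * (D t / t) ^ k
         + real ((CARD('n) - 1) choose (k - 1)) * (D t / t) ^ (k - 1) * (D2 t - D t / t)"
      unfolding H S_k_rk1[OF k] xx using t by simp
    moreover have "u ?x = \<phi> t" using rad x by auto
    ultimately show ?thesis using eqn x(1) by auto
  qed
  have bd: "\<exists>B \<delta>. \<delta> > 0 \<and> (\<forall>t\<in>{0<..<\<delta>}. \<bar>D t\<bar> \<le> B)"
  proof -
    have cp: "continuous_on (ball 0 1) (pderiv1 j0 u)"
      by (intro continuous_at_imp_continuous_on ballI differentiable_imp_continuous_within pdiff)
    have "continuous_on {0..1/2} (\<lambda>t. pderiv1 j0 u (t *\<^sub>R e))"
      by (rule continuous_on_compose2[OF cp]) (use ne in \<open>auto intro!: continuous_intros\<close>)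
    then have "continuous_on {0..1/2} (\<lambda>t. \<bar>D t\<bar>)" unfolding D_def by (intro continuous_intros)
    from continuous_attains_sup[OF compact_Icc _ this] obtain b where
      "\<forall>y\<in>{0..1/2}. \<bar>D y\<bar> \<le> \<bar>D b\<bar>" by auto
    then show ?thesis by (intro exI[of _ "\<bar>D b\<bar>"] exI[of _ "1/2"]) auto
  qed
  have cphi: "continuous_on {0..1} \<phi>"
  proof -
    have "continuous_on {0..1} (\<lambda>t. u (t *\<^sub>R e))"
      by (rule continuous_on_compose2[OF cont]) (use ne in \<open>auto intro!: continuous_intros\<close>)
    then show ?thesis
      by (rule continuous_on_eq) (use rad ne in auto)
  qed
  have "odesol CARD('n) k lam q \<phi> D D2"
    unfolding odesol_def using cphi dphi dD ode bd lt1 mon by blast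
  then show ?thesis by blast
qed

definition mm :: "nat \<Rightarrow> nat \<Rightarrow> real" where "mm n k = (real n - 2 * real k) / (2 * real k)"
definition qq :: "nat \<Rightarrow> nat \<Rightarrow> real" where "qq n k = (real n + 2) * real k / (real n - 2 * real k)"
definition ee :: "nat \<Rightarrow> nat \<Rightarrow> real" where "ee n k = (real n - 2 * real k) / (2 * (real k + 1))"
definition base :: "nat \<Rightarrow> nat \<Rightarrow> real \<Rightarrow> real" where
  "base n k d = d * real (n choose k) powr (1 / real k) * ((real n - 2 * real k) / real k)"
definition cc :: "nat \<Rightarrow> nat \<Rightarrow> real \<Rightarrow> real \<Rightarrow> real" where
  "cc n k lam d = lam powr (- (real n - 2 * real k) / (2 * real k * (real k + 1))) * base n k d powr ee n k"

context
  fixes n k :: nat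
  assumes hk: "1 \<le> k" and hn: "2 * k < n"
begin

lemma Kpos: "real k > 0" using hk by simp
lemma NK: "real n - 2 * real k > 0" using hn by linarith
lemma Cpos: "real (n choose k) > 0" using hn by simp
lemma mm_pos: "mm n k > 0" using NK Kpos by (simp add: mm_def)
lemma ee_pos: "ee n k > 0" using NK Kpos by (simp add: ee_def)
lemma qk_pos: "qq n k - real k > 0"
proof -
  have "qq n k - real k = 2 * real k * (real k + 1) / (real n - 2 * real k)"
    using NK by (simp add: qq_def field_simps)
  then show ?thesis using NK Kpos by simp
qed
lemma nz: "real n - 2 * real k \<noteq> 0" "real k + 1 \<noteq> 0" "real k \<noteq> 0"
  using NK Kpos by auto
lemma qk_eq: "qq n k - real k = 2 * real k * (real k + 1) / (real n - 2 * real k)"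
  using nz by (simp add: qq_def field_simps)
lemma canc1: "a \<noteq> 0 \<Longrightarrow> b \<noteq> 0 \<Longrightarrow> a / (2 * b) * (2 * c * b / a) = (c::real)"
  by (simp add: field_simps)
lemma canc2: "a \<noteq> 0 \<Longrightarrow> b \<noteq> 0 \<Longrightarrow> (- a) / b * (b / a) = (-1::real)"
  by (simp add: field_simps)
lemma ee_qk: "ee n k * (qq n k - real k) = real k"
  unfolding qk_eq ee_def using canc1[OF nz(1) nz(2), of "real k"] by (simp add: mult_ac)
lemma aa_qk: "(- (real n - 2 * real k) / (2 * real k * (real k + 1))) * (qq n k - real k) = -1"
  unfolding qk_eq using canc2[OF nz(1), of "2 * real k * (real k + 1)"] nz by simp
lemma mmq_eq: "mm n k * qq n k = (real n + 2) / 2"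
  unfolding mm_def qq_def using nz by (simp add: field_simps)
lemma mm_q: "(mm n k + 1) * real k + 1 = mm n k * qq n k"
  unfolding mmq_eq unfolding mm_def using nz by (simp add: field_simps)
lemma mm_qk: "mm n k * (qq n k - real k) = real k + 1"
  unfolding qk_eq mm_def using nz by (simp add: field_simps)
lemma mm2: "2 * (mm n k + 1) = real n / real k"
  using nz by (simp add: mm_def field_simps)
lemma base_eq: "base n k d = d * real (n choose k) powr (1 / real k) * (2 * mm n k)"
proof -
  have "(real n - 2 * real k) / real k = 2 * mm n k" using nz by (simp add: mm_def field_simps)
  then show ?thesis by (simp add: base_def)
qed
lemma base_pos: "d > 0 \<Longrightarrow> base n k d > 0"
  using Cpos NK Kpos by (simp add: base_def)
lemma cc_pos: "lam > 0 \<Longrightarrow> d > 0 \<Longrightarrow> cc n k lam d > 0"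
  using base_pos[of d] by (simp add: cc_def)

lemma cc_key:
  assumes lam: "lam > 0" and d: "d > 0"
  shows "lam * cc n k lam d powr (qq n k - real k) = d ^ k * real (n choose k) * (2 * mm n k) ^ k"
proof -
  have "cc n k lam d powr (qq n k - real k)
      = lam powr ((- (real n - 2 * real k) / (2 * real k * (real k + 1))) * (qq n k - real k))
        * base n k d powr (ee n k * (qq n k - real k))"
    unfolding cc_def using lam base_pos[OF d] by (simp add: powr_mult powr_powr)
  also have "\<dots> = lam powr (-1) * base n k d powr (real k)" by (simp only: aa_qk ee_qk)
  also have "base n k d powr (real k) = base n k d ^ k"
    using base_pos[OF d] by (simp add: powr_realpow)
  also have "base n k d ^ k = d ^ k * (real (n choose k) powr (1 / real k)) ^ k * (2 * mm n k) ^ k"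
    unfolding base_eq by (simp add: power_mult_distrib)
  also have "(real (n choose k) powr (1 / real k)) ^ k = real (n choose k)"
    using Cpos Kpos by (simp add: powr_realpow[symmetric] powr_powr)
  finally show ?thesis using lam by (simp add: powr_minus field_simps)
qed

lemma cc_boundary:
  assumes lam: "lam > 0" and d: "d > 0"
  shows "1 - cc n k lam d * (1 + d) powr (- mm n k) = 0 \<longleftrightarrow>
         lam * (d + 1) ^ (k + 1) - real (n choose k) * ((real n - 2 * real k) / real k) ^ k * d ^ k = 0"
proof -
  have c: "cc n k lam d > 0" by (rule cc_pos[OF lam d])
  have "1 - cc n k lam d * (1 + d) powr (- mm n k) = 0 \<longleftrightarrow> cc n k lam d = (1 + d) powr mm n k"
    using d by (auto simp: powr_minus field_simps)
  also have "\<dots> \<longleftrightarrow> cc n k lam d powr (qq n k - real k) = ((1 + d) powr mm n k) powr (qq n k - real k)"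
  proof
    assume "cc n k lam d powr (qq n k - real k) = ((1 + d) powr mm n k) powr (qq n k - real k)"
    then have "(cc n k lam d powr (qq n k - real k)) powr (1 / (qq n k - real k)) =
               (((1 + d) powr mm n k) powr (qq n k - real k)) powr (1 / (qq n k - real k))" by simp
    then show "cc n k lam d = (1 + d) powr mm n k"
      using c d qk_pos by (simp add: powr_powr)
  qed simp
  also have "((1 + d) powr mm n k) powr (qq n k - real k) = (1 + d) ^ (k + 1)"
  proof -
    have "((1 + d) powr mm n k) powr (qq n k - real k) = (1 + d) powr (real (k + 1))"
      using d by (simp add: powr_powr mm_qk add.commute)
    also have "\<dots> = (1 + d) ^ (k + 1)" using d by (intro powr_realpow) simp
    finally show ?thesis .
  qed
  also have "cc n k lam d powr (qq n k - real k) = (1 + d) ^ (k + 1) \<longleftrightarrow>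
      lam * cc n k lam d powr (qq n k - real k) = lam * (1 + d) ^ (k + 1)" using lam by auto
  also have "\<dots> \<longleftrightarrow> lam * (d + 1) ^ (k + 1) - real (n choose k) * ((real n - 2 * real k) / real k) ^ k * d ^ k = 0"
  proof -
    have e2: "2 * mm n k = (real n - 2 * real k) / real k" using nz by (simp add: mm_def field_simps)
    show ?thesis unfolding cc_key[OF lam d] e2 by (auto simp: add.commute mult_ac)
  qed
  finally show ?thesis .
qed

lemma cc_mono:
  assumes lam: "lam > 0" and d: "0 < d1" "d1 < d2"
  shows "cc n k lam d1 < cc n k lam d2"
proof -
  have bm: "base n k d = d * (real (n choose k) powr (1 / real k) * ((real n - 2 * real k) / real k))" for d
    by (simp add: base_def mult.assoc)
  have B0: "real (n choose k) powr (1 / real k) * ((real n - 2 * real k) / real k) > 0"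
    using Cpos NK Kpos by simp
  have "base n k d1 < base n k d2"
    unfolding bm using d B0 by (intro mult_strict_right_mono) auto
  then have "base n k d1 powr ee n k < base n k d2 powr ee n k"
    using base_pos[of d1] d ee_pos by (intro powr_less_mono2) auto
  then show ?thesis unfolding cc_def using lam by simp
qed

lemma cc_surj:
  assumes lam: "lam > 0" and v: "v > 0"
  shows "\<exists>d>0. cc n k lam d = v"
proof -
  define P where "P = lam powr (- (real n - 2 * real k) / (2 * real k * (real k + 1)))"
  define B0 where "B0 = real (n choose k) powr (1 / real k) * ((real n - 2 * real k) / real k)"
  have P: "P > 0" using lam by (simp add: P_def)
  have B0: "B0 > 0" using Cpos NK Kpos by (simp add: B0_def)
  define d where "d = ((v / P) powr (1 / ee n k)) / B0"
  have d: "d > 0" using v P B0 by (simp add: d_def)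
  have bm: "base n k d = d * B0" by (simp add: base_def B0_def mult.assoc)
  have "base n k d = (v / P) powr (1 / ee n k)"
    unfolding bm using B0 by (simp add: d_def)
  then have "base n k d powr ee n k = v / P"
    using v P ee_pos by (simp add: powr_powr)
  then have "cc n k lam d = v" unfolding cc_def P_def[symmetric] using P by simp
  then show ?thesis using d by blast
qed

end

lemma bliss_eq:
  fixes x :: "real^'n::finite"
  assumes lam: "lam > 0"
  shows "1 - lam powr (- (real CARD('n) - 2 * real k) / (2 * real k * (real k + 1))) * (- bliss k d x)
       = 1 - cc CARD('n) k lam d * (1 + d * (x \<bullet> x)) powr (- mm CARD('n) k)"
proof -
  have "- bliss k d x = base CARD('n) k d powr ee CARD('n) k / (1 + d * (x \<bullet> x)) powr mm CARD('n) k"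
    unfolding bliss_def Let_def base_def ee_def mm_def by (simp add: power2_norm_eq_inner)
  then show ?thesis unfolding cc_def by (simp add: powr_minus divide_inverse mult_ac)
qed

context
  fixes n k :: nat
  assumes hk: "1 \<le> k" and hn: "2 * k < n"
begin

lemma Sform:
  fixes c d r2 :: real and i :: nat
  assumes c: "c > 0" and d: "d > 0" and r2: "r2 \<ge> 0" and i: "1 \<le> i" "i \<le> n"
  defines "t \<equiv> 1 + d * r2"
  defines "\<alpha> \<equiv> 2 * (c * mm n k * d * t powr (- mm n k - 1))"
  shows "real (n choose i) * \<alpha> ^ i + real ((n - 1) choose (i - 1)) * \<alpha> ^ (i - 1) *
           ((4 * (- c * mm n k * (mm n k + 1) * d ^ 2 * t powr (- mm n k - 2))) * r2)
       = \<alpha> ^ i * real (n choose i) * (1 - (real i / real k) * (d * r2 / t))"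
proof -
  have t: "t > 0" using d r2 by (simp add: t_def add_pos_nonneg)
  have tp: "t powr (- mm n k - 2) = t powr (- mm n k - 1) / t"
  proof -
    have "t powr (- mm n k - 1) / t = t powr (- mm n k - 1) / t powr 1" using t by simp
    also have "\<dots> = t powr ((- mm n k - 1) - 1)" by (rule powr_diff[symmetric])
    also have "(- mm n k - 1) - 1 = - mm n k - 2" by simp
    finally show ?thesis by simp
  qed
  have b: "(4 * (- c * mm n k * (mm n k + 1) * d ^ 2 * t powr (- mm n k - 2))) * r2
       = \<alpha> * (- (2 * (mm n k + 1))) * (d * r2 / t)"
    unfolding \<alpha>_def tp by (simp add: power2_eq_square field_simps)
  have ai: "\<alpha> ^ (i - 1) * \<alpha> = \<alpha> ^ i" using i by (cases i) auto
  have bin: "real i * real (n choose i) = real n * real ((n - 1) choose (i - 1))"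
  proof -
    have nat: "i * (n choose i) = n * ((n - 1) choose (i - 1))" using i by (intro times_binomial_minus1_eq) simp
    show ?thesis using arg_cong[OF nat, of real] by simp
  qed
  have K: "real k > 0" using hk by simp
  have "real (n choose i) * \<alpha> ^ i + real ((n - 1) choose (i - 1)) * \<alpha> ^ (i - 1) *
           (\<alpha> * (- (real n / real k)) * (d * r2 / t))
      = \<alpha> ^ i * (real (n choose i) - (real n * real ((n - 1) choose (i - 1))) / real k * (d * r2 / t))"
    by (simp add: ai[symmetric] field_simps)
  also have "\<dots> = \<alpha> ^ i * real (n choose i) * (1 - (real i / real k) * (d * r2 / t))"
    unfolding bin[symmetric] using K by (simp add: field_simps)
  finally show ?thesis unfolding b mm2[OF hk hn] .
qed

end

lemma exist_main:
  fixes d lam :: real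
  assumes hk: "1 \<le> k" and hn: "2 * k < CARD('n::finite)" and lam: "lam > 0" and d: "d > 0"
  defines "U \<equiv> (\<lambda>x::real^'n. 1 - cc CARD('n) k lam d * (1 + d * (x \<bullet> x)) powr (- mm CARD('n) k))"
  shows "C2_on (ball 0 1) U" "continuous_on (cball 0 1) U"
    "\<forall>i\<in>{1..k}. \<forall>x. S_k i (hessian U x) \<ge> 0"
    "\<forall>x. S_k k (hessian U x) = lam * (1 - U x) powr qq CARD('n) k"
proof -
  let ?n = "CARD('n)"
  define c where "c = cc ?n k lam d"
  define m where "m = mm ?n k"
  have c: "c > 0" unfolding c_def by (rule cc_pos[OF hk hn lam d])
  have m: "m > 0" unfolding m_def by (rule mm_pos[OF hk hn])
  define g where "g s = 1 - c * (1 + d * s) powr (- m)" for s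
  define g1 where "g1 s = c * m * d * (1 + d * s) powr (- m - 1)" for s
  define g2 where "g2 s = - c * m * (m + 1) * d ^ 2 * (1 + d * s) powr (- m - 2)" for s
  have Ug: "U = (\<lambda>x. g (x \<bullet> x))" by (simp add: U_def g_def c_def m_def)
  have pos: "1 + d * s > 0" if "s \<ge> 0" for s using d that by (simp add: add_pos_nonneg)
  have dg: "(g has_real_derivative g1 s) (at s)" if "s \<ge> 0" for s
  proof -
    have "((\<lambda>s. (1 + d * s) powr (- m)) has_real_derivative (- m) * (1 + d * s) powr (- m - of_nat 1) * d) (at s)"
      by (rule DERIV_fun_powr) (auto intro!: derivative_eq_intros simp: pos[OF that])
    from DERIV_diff[OF DERIV_const[of 1] DERIV_cmult[OF this, of c]]
    show ?thesis unfolding g_def[abs_def] g1_def by (rule DERIV_cong) (simp add: algebra_simps)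
  qed
  have dg1: "(g1 has_real_derivative g2 s) (at s)" if "s \<ge> 0" for s
  proof -
    have "((\<lambda>s. (1 + d * s) powr (- m - 1)) has_real_derivative (- m - 1) * (1 + d * s) powr (- m - 1 - of_nat 1) * d) (at s)"
      by (rule DERIV_fun_powr) (auto intro!: derivative_eq_intros simp: pos[OF that])
    from DERIV_cmult[OF this, of "c * m * d"]
    show ?thesis unfolding g1_def[abs_def] g2_def by (rule DERIV_cong) (simp add: algebra_simps power2_eq_square)
  qed
  note F = radial_sq_facts[OF dg dg1]
  have H: "hessian U x = rk1 (2 * g1 (x \<bullet> x)) (4 * g2 (x \<bullet> x)) x" for x
    unfolding Ug by (rule F(4))
  have posne: "1 + d * (x \<bullet> x) \<noteq> 0" for x :: "real^'n" using pos[of "x \<bullet> x"] by simp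
  have cg1: "continuous_on UNIV (\<lambda>x::real^'n. g1 (x \<bullet> x))"
    unfolding g1_def by (intro continuous_intros) (auto simp: posne)
  have cg2: "continuous_on UNIV (\<lambda>x::real^'n. g2 (x \<bullet> x))"
    unfolding g2_def by (intro continuous_intros) (auto simp: posne)
  show "C2_on (ball 0 1) U"
    unfolding C2_on_def
  proof (intro conjI allI ballI)
    show "U differentiable (at x)" for x unfolding Ug by (rule F(1))
    show "pderiv1 j U differentiable (at x)" for j x unfolding Ug by (rule F(3))
    show "continuous_on (ball 0 1) (\<lambda>x. hessian U x $ i $ j)" for i j
      unfolding H rk1_def
      by (cases "i = j") (auto intro!: continuous_intros continuous_on_subset[OF cg1] continuous_on_subset[OF cg2])
  qed
  show "continuous_on (cball 0 1) U"
    unfolding Ug by (intro continuous_at_imp_continuous_on ballI differentiable_imp_continuous_within F(1))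
  have S: "S_k i (hessian U x) = (2 * g1 (x \<bullet> x)) ^ i * real (?n choose i)
        * (1 - (real i / real k) * (d * (x \<bullet> x) / (1 + d * (x \<bullet> x))))" if i: "1 \<le> i" "i \<le> ?n" for i x
  proof -
    have "S_k i (hessian U x) = real (?n choose i) * (2 * g1 (x \<bullet> x)) ^ i
       + real ((?n - 1) choose (i - 1)) * (2 * g1 (x \<bullet> x)) ^ (i - 1) * (4 * g2 (x \<bullet> x) * (x \<bullet> x))"
      unfolding H S_k_rk1[OF i(1)] by simp
    also have "\<dots> = (2 * g1 (x \<bullet> x)) ^ i * real (?n choose i)
        * (1 - (real i / real k) * (d * (x \<bullet> x) / (1 + d * (x \<bullet> x))))"
      using Sform[OF hk hn c d _ i, of "x \<bullet> x"] unfolding g1_def g2_def m_def by simp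
    finally show ?thesis .
  qed
  show "\<forall>i\<in>{1..k}. \<forall>x. S_k i (hessian U x) \<ge> 0"
  proof (intro ballI allI)
    fix i and x :: "real^'n" assume i: "i \<in> {1..k}"
    have r2: "x \<bullet> x \<ge> 0" by simp
    have t: "1 + d * (x \<bullet> x) > 0" using pos[OF r2] .
    have fr: "d * (x \<bullet> x) / (1 + d * (x \<bullet> x)) \<le> 1" using t by (simp add: divide_le_eq)
    have fr0: "d * (x \<bullet> x) / (1 + d * (x \<bullet> x)) \<ge> 0" using t d by simp
    have ik: "real i / real k \<le> 1" "real i / real k \<ge> 0" using i by auto
    have "(real i / real k) * (d * (x \<bullet> x) / (1 + d * (x \<bullet> x))) \<le> 1"
      using mult_mono[OF ik(1) fr _ fr0] by simp
    moreover have "g1 (x \<bullet> x) \<ge> 0" unfolding g1_def using c m d by simp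
    ultimately show "S_k i (hessian U x) \<ge> 0" using S[of i x] i hn by simp
  qed
  show "\<forall>x. S_k k (hessian U x) = lam * (1 - U x) powr qq CARD('n) k"
  proof
    fix x :: "real^'n"
    let ?t = "1 + d * (x \<bullet> x)"
    have t: "?t > 0" using pos[of "x \<bullet> x"] by simp
    have s1: "S_k k (hessian U x) = (2 * g1 (x \<bullet> x)) ^ k * real (?n choose k) / ?t"
      using S[of k x] hk hn t by (simp add: field_simps)
    have s2: "(2 * g1 (x \<bullet> x)) ^ k = (2 * m * d) ^ k * c ^ k * ?t powr ((- m - 1) * real k)"
      unfolding g1_def using t by (simp add: power_mult_distrib powr_realpow[symmetric] powr_powr mult_ac)
    have e: "?t powr ((- m - 1) * real k) / ?t = ?t powr ((- m - 1) * real k - 1)"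
    proof -
      have "?t powr ((- m - 1) * real k) / ?t = ?t powr ((- m - 1) * real k) / ?t powr 1" using t by simp
      also have "\<dots> = ?t powr ((- m - 1) * real k - 1)" by (rule powr_diff[symmetric])
      finally show ?thesis .
    qed
    have lhs: "S_k k (hessian U x) = (2 * m * d) ^ k * c ^ k * real (?n choose k) * ?t powr ((- m - 1) * real k - 1)"
      unfolding s1 s2 e[symmetric] by (simp add: mult_ac)
    have "1 - U x = c * ?t powr (- m)" by (simp add: U_def c_def m_def)
    then have "lam * (1 - U x) powr qq ?n k = lam * c powr qq ?n k * ?t powr (- m * qq ?n k)"
      using c t by (simp add: powr_mult powr_powr)
    also have "- m * qq ?n k = (- m - 1) * real k - 1"
      using mm_q[OF hk hn] unfolding m_def by (simp add: algebra_simps)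
    also have "lam * c powr qq ?n k = (2 * m * d) ^ k * c ^ k * real (?n choose k)"
    proof -
      have "c powr qq ?n k = c powr (qq ?n k - real k) * c powr real k"
        using c by (simp add: powr_add[symmetric])
      moreover have "c powr real k = c ^ k" using c by (simp add: powr_realpow)
      ultimately show ?thesis
        using cc_key[OF hk hn lam d] unfolding c_def[symmetric] m_def[symmetric]
        by (simp add: power_mult_distrib mult_ac)
    qed
    finally show "S_k k (hessian U x) = lam * (1 - U x) powr qq CARD('n) k"
      using lhs by simp
  qed
qed

definition fr :: "nat \<Rightarrow> real \<Rightarrow> real" where "fr k d = d ^ k / (d + 1) ^ (k + 1)"

context fixes k :: nat assumes hk: "1 \<le> k"
begin

lemma fr_deriv:
  assumes d: "d > 0"
  shows "DERIV (fr k) d :> d ^ (k - 1) * (d + 1) ^ k * (real k - d) / ((d + 1) ^ (k + 1)) ^ 2"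
proof -
  have d1: "DERIV (\<lambda>x. x ^ k) d :> real k * d ^ (k - Suc 0)" by (rule DERIV_pow)
  have d2: "DERIV (\<lambda>x. (x + 1) ^ (k + 1)) d :> real (k + 1) * (d + 1) ^ k"
    using DERIV_power[where n="k + 1", OF DERIV_add[OF DERIV_ident DERIV_const[of 1]]] by simp
  have ne: "(d + 1) ^ (k + 1) \<noteq> 0" using d by simp
  have q: "DERIV (fr k) d :> (real k * d ^ (k - Suc 0) * (d + 1) ^ (k + 1) - real (k + 1) * (d + 1) ^ k * d ^ k)
                 / ((d + 1) ^ (k + 1) * (d + 1) ^ (k + 1))"
    using DERIV_divide[OF d1 d2 ne] unfolding fr_def[abs_def] by (rule DERIV_cong) (simp add: mult_ac)
  have "real k * d ^ (k - Suc 0) * (d + 1) ^ (k + 1) - real (k + 1) * (d + 1) ^ k * d ^ k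
      = d ^ (k - 1) * (d + 1) ^ k * (real k - d)"
  proof -
    obtain j where j: "k = Suc j" using hk by (cases k) auto
    show ?thesis unfolding j by (simp add: algebra_simps)
  qed
  with q show ?thesis by (simp add: power2_eq_square)
qed

lemma fr_cont: "continuous_on {a..b} (fr k)" if "0 \<le> a" for a b
  unfolding fr_def using that by (intro continuous_intros) auto

lemma fr_inc:
  assumes ab: "0 \<le> a" "a < b" "b \<le> real k" shows "fr k a < fr k b"
proof (rule DERIV_pos_imp_increasing_open[OF ab(2)])
  fix x assume "a < x" "x < b"
  then have x: "x > 0" "x < real k" using ab by auto
  have "x ^ (k - 1) * (x + 1) ^ k * (real k - x) / ((x + 1) ^ (k + 1)) ^ 2 > 0"
    using x by simp
  then show "\<exists>y. DERIV (fr k) x :> y \<and> y > 0" using fr_deriv[OF x(1)] by blast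
qed (use ab in \<open>auto intro: fr_cont\<close>)

lemma fr_dec:
  assumes ab: "real k \<le> a" "a < b" shows "fr k b < fr k a"
proof (rule DERIV_neg_imp_decreasing_open[OF ab(2)])
  fix x assume "a < x" "x < b"
  then have x: "x > 0" "x > real k" using hk ab by auto
  have "x ^ (k - 1) * (x + 1) ^ k * (real k - x) / ((x + 1) ^ (k + 1)) ^ 2 < 0"
    using x by (simp add: mult_pos_neg divide_neg_pos)
  then show "\<exists>y. DERIV (fr k) x :> y \<and> y < 0" using fr_deriv[OF x(1)] by blast
qed (use hk ab in \<open>auto intro: fr_cont\<close>)

lemma fr_small: "d > 0 \<Longrightarrow> fr k d \<le> 1 / (d + 1)"
proof -
  assume d: "d > 0"
  have "d ^ k \<le> (d + 1) ^ k" using d by (intro power_mono) auto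
  then have "d ^ k / (d + 1) ^ (k + 1) \<le> (d + 1) ^ k / (d + 1) ^ (k + 1)"
    using d by (intro divide_right_mono) auto
  also have "\<dots> = 1 / (d + 1)"
  proof -
    have "(d + 1) ^ (k + 1) = (d + 1) ^ k * (d + 1)" by simp
    then show ?thesis using d by (simp del: power_Suc)
  qed
  finally show ?thesis by (simp add: fr_def)
qed

lemma root_iff:
  assumes "Cc > 0" "d > 0"
  shows "lam * (d + 1) ^ (k + 1) - Cc * d ^ k = 0 \<longleftrightarrow> lam = Cc * fr k d"
proof -
  have gen: "P \<noteq> 0 \<Longrightarrow> (lam = Cc * (A / P)) = (lam * P = Cc * A)" for P A :: real
    by (auto simp: field_simps)
  have P: "(d + 1) ^ (k + 1) \<noteq> 0" using assms by simp
  show ?thesis unfolding fr_def gen[OF P] by simp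
qed

lemma two_roots:
  assumes Cc: "Cc > 0" and lam: "0 < lam" "lam < Cc * fr k (real k)"
  shows "\<exists>dm dp. 0 < dm \<and> dm < dp \<and> {d. d > 0 \<and> lam * (d + 1) ^ (k + 1) - Cc * d ^ k = 0} = {dm, dp}"
proof -
  have K: "real k > 0" using hk by simp
  have f0: "fr k 0 = 0" using hk by (simp add: fr_def)
  have cf: "continuous_on {0..real k} (\<lambda>d. Cc * fr k d)"
    by (intro continuous_on_mult continuous_on_const fr_cont) simp
  obtain dm where dm: "0 \<le> dm" "dm \<le> real k" "Cc * fr k dm = lam"
    using IVT'[of "\<lambda>d. Cc * fr k d" 0 lam "real k", OF _ _ _ cf] lam K f0 by auto
  have dm0: "dm > 0" using dm lam f0 by (cases "dm = 0") auto
  have "dm \<noteq> real k" using dm lam by auto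
  then have dmk: "dm < real k" using dm by simp
  define B where "B = max (real k + 1) (Cc / lam)"
  have B: "B > real k" "Cc * fr k B < lam"
  proof -
    show "B > real k" by (simp add: B_def)
    have "B > 0" using K by (simp add: B_def)
    then have "Cc * fr k B \<le> Cc * (1 / (B + 1))" using fr_small Cc by (intro mult_left_mono) auto
    also have "\<dots> < lam"
    proof -
      have "Cc / lam \<le> B" by (simp add: B_def)
      then have "Cc \<le> B * lam" using lam by (simp add: divide_le_eq)
      then have "Cc < (B + 1) * lam" using lam by (simp add: algebra_simps)
      then show ?thesis using \<open>B > 0\<close> by (simp add: divide_less_eq mult.commute)
    qed
    finally show "Cc * fr k B < lam" .
  qed
  have cf2: "continuous_on {real k..B} (\<lambda>d. Cc * fr k d)"
    by (intro continuous_on_mult continuous_on_const fr_cont) simp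
  obtain dp where dp: "real k \<le> dp" "dp \<le> B" "Cc * fr k dp = lam"
    using IVT2'[of "\<lambda>d. Cc * fr k d" B lam "real k", OF _ _ _ cf2] lam B K by auto
  have dpk: "dp > real k" using dp lam by (cases "dp = real k") auto
  show ?thesis
  proof (intro exI conjI)
    show "0 < dm" "dm < dp" using dm0 dmk dpk by auto
    show "{d. d > 0 \<and> lam * (d + 1) ^ (k + 1) - Cc * d ^ k = 0} = {dm, dp}"
    proof
      show "{dm, dp} \<subseteq> {d. d > 0 \<and> lam * (d + 1) ^ (k + 1) - Cc * d ^ k = 0}"
        using root_iff[OF Cc] dm dp dm0 dpk K by auto
      show "{d. d > 0 \<and> lam * (d + 1) ^ (k + 1) - Cc * d ^ k = 0} \<subseteq> {dm, dp}"
      proof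
        fix d assume "d \<in> {d. d > 0 \<and> lam * (d + 1) ^ (k + 1) - Cc * d ^ k = 0}"
        then have d: "d > 0" "Cc * fr k d = lam" using root_iff[OF Cc] by auto
        have "d = dm" if "d \<le> real k"
        proof (rule ccontr)
          assume "d \<noteq> dm"
          then have "fr k d \<noteq> fr k dm"
            using fr_inc[of d dm] fr_inc[of dm d] that dm d by (cases "d < dm") auto
          then show False using d dm Cc by auto
        qed
        moreover have "d = dp" if "d > real k"
        proof (rule ccontr)
          assume "d \<noteq> dp"
          then have "fr k d \<noteq> fr k dp"
            using fr_dec[of d dp] fr_dec[of dp d] that dp by (cases "d < dp") auto
          then show False using d dp Cc by auto
        qed
        ultimately show "d \<in> {dm, dp}" by force
      qed
    qed
  qed
qed

lemma one_root:
  assumes Cc: "Cc > 0" and lam: "lam = Cc * fr k (real k)"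
  shows "{d. d > 0 \<and> lam * (d + 1) ^ (k + 1) - Cc * d ^ k = 0} = {real k}"
proof -
  have K: "real k > 0" using hk by simp
  have "d = real k" if "d > 0" "Cc * fr k d = lam" for d
  proof (rule ccontr)
    assume "d \<noteq> real k"
    then have "fr k d < fr k (real k)"
      using fr_inc[of d "real k"] fr_dec[of "real k" d] that by (cases "d < real k") auto
    then show False using that lam Cc by auto
  qed
  show ?thesis
  proof (intro set_eqI iffI)
    fix d assume "d \<in> {d. d > 0 \<and> lam * (d + 1) ^ (k + 1) - Cc * d ^ k = 0}"
    then have "d > 0" "Cc * fr k d = lam" using root_iff[OF Cc] by auto
    then show "d \<in> {real k}" using \<open>\<And>d. d > 0 \<Longrightarrow> Cc * fr k d = lam \<Longrightarrow> d = real k\<close> by auto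
  next
    fix d assume "d \<in> {real k}"
    then have "d = real k" by simp
    moreover have "lam * (real k + 1) ^ (k + 1) - Cc * real k ^ k = 0"
      using iffD2[OF root_iff[OF Cc K] lam] .
    ultimately show "d \<in> {d. d > 0 \<and> lam * (d + 1) ^ (k + 1) - Cc * d ^ k = 0}"
      using K by simp
  qed
qed

end

lemma qstar_qq: "qstar TYPE('n::finite) k = qq CARD('n) k"
  by (simp add: qstar_def qq_def)

definition Ud :: "nat \<Rightarrow> real \<Rightarrow> real \<Rightarrow> real^'n::finite \<Rightarrow> real" where
  "Ud k lam d x = 1 - cc CARD('n) k lam d * (1 + d * (x \<bullet> x)) powr (- mm CARD('n) k)"

lemma Ud_radial:
  "Ud k lam d x = (\<lambda>t. 1 - cc CARD('n) k lam d * (1 + d * t ^ 2) powr (- mm CARD('n) k)) (norm (x::real^'n::finite))"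
  by (simp add: Ud_def power2_norm_eq_inner)

lemma Ud_sol_facts:
  assumes hk: "1 \<le> k" and hn: "2 * k < CARD('n::finite)" and lam: "lam > 0" and d: "d > 0"
  shows "C2_on (ball 0 1) (Ud k lam d :: real^'n \<Rightarrow> real)" "continuous_on (cball 0 1) (Ud k lam d :: real^'n \<Rightarrow> real)"
    "\<forall>i\<in>{1..k}. \<forall>x::real^'n. S_k i (hessian (Ud k lam d) x) \<ge> 0"
    "\<forall>x::real^'n. S_k k (hessian (Ud k lam d) x) = lam * (1 - Ud k lam d x) powr qstar TYPE('n) k"
  using exist_main[OF hk hn lam d] unfolding Ud_def[abs_def] qstar_qq by auto

lemma Ud_sol:
  assumes hk: "1 \<le> k" and hn: "2 * k < CARD('n::finite)" and lam: "lam > 0" and d: "d > 0"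
    and root: "lam * (d + 1) ^ (k + 1) - real (CARD('n) choose k) * ((real CARD('n) - 2 * real k) / real k) ^ k * d ^ k = 0"
  shows "is_solution k lam (Ud k lam d :: real^'n \<Rightarrow> real) \<and> radial (Ud k lam d :: real^'n \<Rightarrow> real)"
proof -
  let ?n = "CARD('n)"
  have bd: "1 - cc ?n k lam d * (1 + d) powr (- mm ?n k) = 0"
    using cc_boundary[OF hk hn lam d] root by simp
  have c: "cc ?n k lam d > 0" by (rule cc_pos[OF hk hn lam d])
  have m: "mm ?n k > 0" by (rule mm_pos[OF hk hn])
  have neg: "Ud k lam d x < 0" if "x \<in> ball (0::real^'n) 1" for x
  proof -
    have xx: "x \<bullet> x < 1" using that by (simp add: dot_square_norm power_less_one_iff)
    then have "1 + d * (x \<bullet> x) < 1 + d" using d by simp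
    then have "(1 + d) powr (- mm ?n k) < (1 + d * (x \<bullet> x)) powr (- mm ?n k)"
      using m d by (intro powr_less_mono2_neg) (auto simp: add_pos_nonneg)
    then have "cc ?n k lam d * (1 + d) powr (- mm ?n k) < cc ?n k lam d * (1 + d * (x \<bullet> x)) powr (- mm ?n k)"
      using c by simp
    then show ?thesis using bd by (simp add: Ud_def)
  qed
  have sph: "Ud k lam d x = 0" if "x \<in> sphere (0::real^'n) 1" for x
  proof -
    have "x \<bullet> x = 1" using that by (simp add: dot_square_norm)
    then show ?thesis using bd by (simp add: Ud_def)
  qed
  have "is_solution k lam (Ud k lam d :: real^'n \<Rightarrow> real)"
    unfolding is_solution_def using Ud_sol_facts[OF hk hn lam d] neg sph by auto
  moreover have "radial (Ud k lam d :: real^'n \<Rightarrow> real)"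
    unfolding radial_def
    by (rule exI[of _ "\<lambda>t. 1 - cc ?n k lam d * (1 + d * t ^ 2) powr (- mm ?n k)"]) (simp add: Ud_radial[where 'n='n])
  ultimately show ?thesis by blast
qed

lemma sol_unique:
  fixes u :: "real^'n::finite \<Rightarrow> real"
  assumes hk: "1 \<le> k" and hn: "2 * k < CARD('n)" and lam: "lam > 0"
    and sol: "is_solution k lam u" and rad: "radial u"
  shows "\<exists>d>0. lam * (d + 1) ^ (k + 1) - real (CARD('n) choose k) * ((real CARD('n) - 2 * real k) / real k) ^ k * d ^ k = 0
             \<and> (\<forall>x\<in>cball 0 1. u x = Ud k lam d x)"
proof -
  let ?n = "CARD('n)"
  obtain \<phi> where \<phi>: "\<forall>x\<in>cball 0 1. u x = \<phi> (norm x)" using rad unfolding radial_def by blast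
  obtain j0 :: 'n where True by blast
  define e :: "real^'n" where "e = axis j0 1"
  have ne: "norm e = 1" by (simp add: e_def)
  have C2: "C2_on (ball 0 1) u" and cont: "continuous_on (cball 0 1) u"
    and eqn: "\<forall>x\<in>ball 0 1. S_k k (hessian u x) = lam * (1 - u x) powr qq ?n k"
    and neg: "\<forall>x\<in>ball 0 1. u x < 0" and sph: "\<forall>x\<in>sphere 0 1. u x = 0"
    using sol unfolding is_solution_def qstar_qq by auto
  have phit: "\<phi> t = u (t *\<^sub>R e)" if "t \<in> {0..1}" for t
    using \<phi> that ne by auto
  have lt1: "\<forall>t\<in>{0..1}. \<phi> t < 1"
  proof
    fix t :: real assume t: "t \<in> {0..1}"
    show "\<phi> t < 1"
    proof (cases "t < 1")
      case True
      have "t *\<^sub>R e \<in> ball 0 1" using t True ne by simp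
      then have "u (t *\<^sub>R e) < 0" using neg by blast
      then show ?thesis using phit[OF t] by simp
    next
      case False then have "t = 1" using t by auto
      then show ?thesis using phit[OF t] sph ne by force
    qed
  qed
  have phi0: "\<phi> 0 < 0" using phit[of 0] neg by simp
  have phi1: "\<phi> 1 = 0" using phit[of 1] sph ne by simp
  have ode1: "\<exists>D D2. odesol ?n k lam (qq ?n k) \<phi> D D2"
    by (rule radial_odesol[OF hk C2 cont eqn \<phi> lt1]) (use phi0 phi1 in simp)
  obtain d where d: "d > 0" "cc ?n k lam d = 1 - \<phi> 0"
    using cc_surj[OF hk hn lam, of "1 - \<phi> 0"] phi0 by auto
  define \<psi> where "\<psi> t = 1 - cc ?n k lam d * (1 + d * t ^ 2) powr (- mm ?n k)" for t
  have c: "cc ?n k lam d > 0" by (rule cc_pos[OF hk hn lam d(1)])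
  have m: "mm ?n k > 0" by (rule mm_pos[OF hk hn])
  note F = Ud_sol_facts[OF hk hn lam d(1)]
  have ode2: "\<exists>D D2. odesol ?n k lam (qq ?n k) \<psi> D D2"
  proof (rule radial_odesol[OF hk F(1) F(2)])
    show "\<forall>x\<in>ball 0 1. S_k k (hessian (Ud k lam d) (x::real^'n)) = lam * (1 - Ud k lam d x) powr qq ?n k"
      using F(4) unfolding qstar_qq by auto
    show "\<forall>x\<in>cball 0 1. Ud k lam d (x::real^'n) = \<psi> (norm x)"
      using Ud_radial[where 'n='n] unfolding \<psi>_def by simp
    show "\<forall>t\<in>{0..1}. \<psi> t < 1"
    proof
      fix t :: real assume "t \<in> {0..1}"
      have "1 + d * t ^ 2 > 0" using d by (simp add: add_pos_nonneg)
      then have "(1 + d * t ^ 2) powr (- mm ?n k) > 0" by simp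
      then show "\<psi> t < 1" using c by (simp add: \<psi>_def)
    qed
    have "(1 + d) powr (- mm ?n k) < 1 powr (- mm ?n k)"
      using m d by (intro powr_less_mono2_neg) auto
    then show "\<psi> 0 < \<psi> 1" using c by (simp add: \<psi>_def)
  qed
  have qpos: "qq ?n k \<ge> 0" using qk_pos[OF hk hn] by simp
  obtain D D2 E E2 where o1: "odesol ?n k lam (qq ?n k) \<phi> D D2" and o2: "odesol ?n k lam (qq ?n k) \<psi> E E2"
    using ode1 ode2 by blast
  have init: "\<phi> 0 = \<psi> 0" using d by (simp add: \<psi>_def)
  have kn: "k < ?n" using hn by simp
  have eq: "\<forall>t\<in>{0..1}. \<phi> t = \<psi> t" by (rule odesol_unique[OF o1 o2 hk kn lam qpos init])
  have U: "\<forall>x\<in>cball 0 1. u x = Ud k lam d x"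
  proof
    fix x :: "real^'n" assume x: "x \<in> cball 0 1"
    then have "u x = \<phi> (norm x)" using \<phi> by auto
    also have "\<dots> = \<psi> (norm x)" using eq x by auto
    also have "\<dots> = Ud k lam d x" using Ud_radial[of k lam d x] unfolding \<psi>_def by simp
    finally show "u x = Ud k lam d x" .
  qed
  have "Ud k lam d e = 0" using U sph ne by auto
  then have "1 - cc ?n k lam d * (1 + d) powr (- mm ?n k) = 0"
    using ne by (simp add: Ud_def dot_square_norm)
  then have "lam * (d + 1) ^ (k + 1) - real (?n choose k) * ((real ?n - 2 * real k) / real k) ^ k * d ^ k = 0"
    using cc_boundary[OF hk hn lam d(1)] by simp
  then show ?thesis using d U by blast
qed

theorem theorem2:
  fixes k :: nat and lam :: real
  assumes hk: "k \<ge> 1"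
    and hn: "CARD('n::finite) > 2 * k"
  shows
    "(0 < lam \<and> lam < mustar TYPE('n) k \<longrightarrow>
       (\<exists>dm dp. 0 < dm \<and> dm < dp \<and>
          {d::real. d > 0 \<and> lam * (d + 1) ^ (k + 1)
              - real (CARD('n) choose k) * ((real CARD('n) - 2 * real k) / real k) ^ k * d ^ k = 0}
            = {dm, dp} \<and>
          (let ul = (\<lambda>x::real^'n. 1 - lam powr (- (real CARD('n) - 2 * real k) / (2 * real k * (real k + 1)))
                                     * (- bliss k dm x));
               Ul = (\<lambda>x::real^'n. 1 - lam powr (- (real CARD('n) - 2 * real k) / (2 * real k * (real k + 1)))
                                     * (- bliss k dp x))
           in is_solution k lam ul \<and> radial ul \<and>
              is_solution k lam Ul \<and> radial Ul \<and>
              (\<exists>x\<in>ball 0 1. ul x \<noteq> Ul x) \<and>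
              (\<forall>u. is_solution k lam u \<and> radial u \<longrightarrow>
                   (\<forall>x\<in>cball 0 1. u x = ul x) \<or> (\<forall>x\<in>cball 0 1. u x = Ul x)))))
     \<and>
     (lam = mustar TYPE('n) k \<longrightarrow>
       (let us = (\<lambda>x::real^'n. 1 - (mustar TYPE('n) k) powr (- (real CARD('n) - 2 * real k) / (2 * real k * (real k + 1)))
                                   * (- bliss k (real k) x))
        in is_solution k lam us \<and> radial us \<and>
           (\<forall>x\<in>ball 0 1. us x = 1 - ((1 + real k) / (1 + real k * (norm x)^2))
                                           powr ((real CARD('n) - 2 * real k) / (2 * real k))) \<and>
           (\<forall>u. is_solution k lam u \<and> radial u \<longrightarrow> (\<forall>x\<in>cball 0 1. u x = us x))))"
proof -
  let ?n = "CARD('n)"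
  have hn': "2 * k < ?n" using hn .
  define Cc where "Cc = real (?n choose k) * ((real ?n - 2 * real k) / real k) ^ k"
  have Cc: "Cc > 0" using Cpos[OF hk hn'] NK[OF hk hn'] Kpos[OF hk hn'] by (simp add: Cc_def)
  have mu: "mustar TYPE('n) k = Cc * fr k (real k)"
    unfolding mustar_def Cc_def fr_def by (simp add: mult_ac)
  have Kp: "real k > 0" using hk by simp
  have ueq: "(\<lambda>x::real^'n. 1 - l powr (- (real CARD('n) - 2 * real k) / (2 * real k * (real k + 1))) * (- bliss k d x))
      = Ud k l d" if "l > 0" for l d
    by (rule ext, unfold Ud_def, rule bliss_eq[OF that])
  show ?thesis
  proof (intro conjI impI)
    assume lam: "0 < lam \<and> lam < mustar TYPE('n) k"
    then have lam0: "lam > 0" by simp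
    obtain dm dp where dmp: "0 < dm" "dm < dp"
      and set: "{d. d > 0 \<and> lam * (d + 1) ^ (k + 1) - Cc * d ^ k = 0} = {dm, dp}"
      using two_roots[OF hk Cc, of lam] lam mu by auto
    have rm: "lam * (dm + 1) ^ (k + 1) - real (?n choose k) * ((real ?n - 2 * real k) / real k) ^ k * dm ^ k = 0"
      using set unfolding Cc_def by blast
    have rp: "lam * (dp + 1) ^ (k + 1) - real (?n choose k) * ((real ?n - 2 * real k) / real k) ^ k * dp ^ k = 0"
      using set unfolding Cc_def by blast
    have dp0: "dp > 0" using dmp by simp
    show "\<exists>dm dp. 0 < dm \<and> dm < dp \<and>
          {d::real. d > 0 \<and> lam * (d + 1) ^ (k + 1)
              - real (CARD('n) choose k) * ((real CARD('n) - 2 * real k) / real k) ^ k * d ^ k = 0}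
            = {dm, dp} \<and>
          (let ul = (\<lambda>x::real^'n. 1 - lam powr (- (real CARD('n) - 2 * real k) / (2 * real k * (real k + 1)))
                                     * (- bliss k dm x));
               Ul = (\<lambda>x::real^'n. 1 - lam powr (- (real CARD('n) - 2 * real k) / (2 * real k * (real k + 1)))
                                     * (- bliss k dp x))
           in is_solution k lam ul \<and> radial ul \<and>
              is_solution k lam Ul \<and> radial Ul \<and>
              (\<exists>x\<in>ball 0 1. ul x \<noteq> Ul x) \<and>
              (\<forall>u. is_solution k lam u \<and> radial u \<longrightarrow>
                   (\<forall>x\<in>cball 0 1. u x = ul x) \<or> (\<forall>x\<in>cball 0 1. u x = Ul x)))"
    proof (rule exI[of _ dm], rule exI[of _ dp], intro conjI)
      show "0 < dm" "dm < dp" using dmp by auto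
      show "{d::real. d > 0 \<and> lam * (d + 1) ^ (k + 1)
              - real (CARD('n) choose k) * ((real CARD('n) - 2 * real k) / real k) ^ k * d ^ k = 0} = {dm, dp}"
        using set unfolding Cc_def .
      have s1: "is_solution k lam (Ud k lam dm :: real^'n \<Rightarrow> real) \<and> radial (Ud k lam dm :: real^'n \<Rightarrow> real)"
        by (rule Ud_sol[OF hk hn' lam0 dmp(1) rm])
      have s2: "is_solution k lam (Ud k lam dp :: real^'n \<Rightarrow> real) \<and> radial (Ud k lam dp :: real^'n \<Rightarrow> real)"
        by (rule Ud_sol[OF hk hn' lam0 dp0 rp])
      have dist: "Ud k lam dm (0::real^'n) \<noteq> Ud k lam dp (0::real^'n)"
        using cc_mono[OF hk hn' lam0 dmp] by (simp add: Ud_def)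
      have un: "(\<forall>x\<in>cball 0 1. u x = Ud k lam dm x) \<or> (\<forall>x\<in>cball 0 1. u x = Ud k lam dp x)"
        if us: "is_solution k lam u \<and> radial (u :: real^'n \<Rightarrow> real)" for u
      proof -
        obtain d where d: "d > 0"
          "lam * (d + 1) ^ (k + 1) - real (?n choose k) * ((real ?n - 2 * real k) / real k) ^ k * d ^ k = 0"
          "\<forall>x\<in>cball 0 1. u x = Ud k lam d x"
          using sol_unique[OF hk hn' lam0, of u] us by blast
        have "d \<in> {dm, dp}" using set d(1,2) unfolding Cc_def by blast
        then show ?thesis using d(3) by auto
      qed
      show "let ul = (\<lambda>x::real^'n. 1 - lam powr (- (real CARD('n) - 2 * real k) / (2 * real k * (real k + 1)))
                                     * (- bliss k dm x));
               Ul = (\<lambda>x::real^'n. 1 - lam powr (- (real CARD('n) - 2 * real k) / (2 * real k * (real k + 1)))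
                                     * (- bliss k dp x))
           in is_solution k lam ul \<and> radial ul \<and>
              is_solution k lam Ul \<and> radial Ul \<and>
              (\<exists>x\<in>ball 0 1. ul x \<noteq> Ul x) \<and>
              (\<forall>u. is_solution k lam u \<and> radial u \<longrightarrow>
                   (\<forall>x\<in>cball 0 1. u x = ul x) \<or> (\<forall>x\<in>cball 0 1. u x = Ul x))"
        unfolding Let_def ueq[OF lam0]
        using s1 s2 un dist by (intro conjI bexI[of _ 0] allI impI) auto
    qed
  next
    assume lam: "lam = mustar TYPE('n) k"
    have lamv: "lam = Cc * fr k (real k)" using lam mu by simp
    have lam0: "lam > 0" unfolding lamv using Cc Kp by (simp add: fr_def)
    have set: "{d. d > 0 \<and> lam * (d + 1) ^ (k + 1) - Cc * d ^ k = 0} = {real k}"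
      by (rule one_root[OF hk Cc lamv])
    have rk: "lam * (real k + 1) ^ (k + 1) - real (?n choose k) * ((real ?n - 2 * real k) / real k) ^ k * real k ^ k = 0"
      using set unfolding Cc_def by blast
    have s: "is_solution k lam (Ud k lam (real k) :: real^'n \<Rightarrow> real) \<and> radial (Ud k lam (real k) :: real^'n \<Rightarrow> real)"
      by (rule Ud_sol[OF hk hn' lam0 Kp rk])
    have form: "Ud k lam (real k) x = 1 - ((1 + real k) / (1 + real k * (norm x)^2))
                   powr ((real CARD('n) - 2 * real k) / (2 * real k))" for x :: "real^'n"
    proof -
      have bd: "1 - cc ?n k lam (real k) * (1 + real k) powr (- mm ?n k) = 0"
        using cc_boundary[OF hk hn' lam0 Kp] rk by simp
      then have ccv: "cc ?n k lam (real k) = (1 + real k) powr mm ?n k"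
        using Kp by (simp add: powr_minus field_simps)
      have pos: "1 + real k * (norm x)^2 > 0" using Kp by (simp add: add_pos_nonneg)
      have "Ud k lam (real k) x = 1 - (1 + real k) powr mm ?n k / (1 + real k * (norm x)^2) powr mm ?n k"
        by (simp add: Ud_def ccv powr_minus divide_inverse power2_norm_eq_inner)
      also have "(1 + real k) powr mm ?n k / (1 + real k * (norm x)^2) powr mm ?n k
          = ((1 + real k) / (1 + real k * (norm x)^2)) powr mm ?n k"
        using pos Kp by (simp add: powr_divide)
      finally show ?thesis by (simp add: mm_def)
    qed
    have un: "\<forall>x\<in>cball 0 1. u x = Ud k lam (real k) x"
      if us: "is_solution k lam u \<and> radial (u :: real^'n \<Rightarrow> real)" for u
    proof -
      obtain d where d: "d > 0"
        "lam * (d + 1) ^ (k + 1) - real (?n choose k) * ((real ?n - 2 * real k) / real k) ^ k * d ^ k = 0"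
        "\<forall>x\<in>cball 0 1. u x = Ud k lam d x"
        using sol_unique[OF hk hn' lam0, of u] us by blast
      have "d \<in> {real k}" using set d(1,2) unfolding Cc_def by blast
      then show ?thesis using d(3) by auto
    qed
    show "let us = (\<lambda>x::real^'n. 1 - (mustar TYPE('n) k) powr (- (real CARD('n) - 2 * real k) / (2 * real k * (real k + 1)))
                                   * (- bliss k (real k) x))
        in is_solution k lam us \<and> radial us \<and>
           (\<forall>x\<in>ball 0 1. us x = 1 - ((1 + real k) / (1 + real k * (norm x)^2))
                                           powr ((real CARD('n) - 2 * real k) / (2 * real k))) \<and>
           (\<forall>u. is_solution k lam u \<and> radial u \<longrightarrow> (\<forall>x\<in>cball 0 1. u x = us x))"
      unfolding Let_def lam[symmetric] ueq[OF lam0]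
      using s form un by blast
  qed
qed

end
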